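(* Fix reals $0<\varepsilon<1$ and $c\ge 12/\varepsilon$, and let $S$ and the squares $Q_n$ be as produced by the construction described in the context (with any choices allowed there). Call a lattice point of $Q_n$ red if it lies on a common line with two points of $S\cap Q_m$ for some $m<n$. Then for all sufficiently large $n$, the number of red points in $Q_n$ is at most $$\sum_{m<n}\frac{8\cdot2^{m+n}}{c^{3}n^{2+2\varepsilon}m^{1+\varepsilon}}\cdot n<\frac{16\cdot2^{n+n}}{c^{3}n^{2+2\varepsilon}n^{1+\varepsilon}}\cdot n,$$ where the sum runs over those $m<n$ for which $Q_m$ is defined.
   Context: Construction. Fix $0<\varepsilon<1$ and $c\ge 12/\varepsilon$. For each sufficiently large integer $n$ (say $n\ge n_0$), let $s_n=\left\lfloor\frac{2^n}{cn^{1+\varepsilon}}\right\rfloor$, $Y_n=\left\lfloor\frac{2^n}{n^{\varepsilon}}\right\rfloor$, and let $Q_n=[2^n,2^n+s_n]\times[Y_n-s_n,Y_n]$ be the axis-parallel square with side $s_n$ and top left corner $(2^n,Y_n)$. Let $p_n$ be the largest prime smaller than $s_n$. For integers $a,b$, let $\mathcal{P}_n(a,b)=\{(2^n+x,\;Y_n-y): x,y\in\{0,\dots,p_n-1\},\ y\equiv (x-a)^2+b \pmod{p_n}\}$, a translated copy of the modular parabola $y=(x-a)^2+b \bmod p_n$ in $Q_n$. The set $S\subseteq\mathbb{Z}^2$ is built iteratively for $n=n_0,n_0+1,\dots$: given the already selected points $S_{<n}=S\cap\bigcup_{m<n}Q_m$, choose parameters $(a_n,b_n)\in\{0,\dots,p_n-1\}^2$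 minimizing the number of collinear triples formed by points of $\mathcal{P}_n(a_n,b_n)\cup S_{<n}$ that contain points of both $\mathcal{P}_n(a_n,b_n)$ and $S_{<n}$; delete from $\mathcal{P}_n=\mathcal{P}_n(a_n,b_n)$ one point of each such triple, and add the remaining points of $\mathcal{P}_n$ to $S$. Thus $S\cap Q_n\subseteq\mathcal{P}_n$. *)

theory Defs
  imports "HOL-Analysis.Analysis" "HOL-Computational_Algebra.Primes"
begin

type_synonym pt = "int \<times> int"

definition side :: "real \<Rightarrow> real \<Rightarrow> nat \<Rightarrow> nat" where
  "side eps c n = nat \<lfloor>2 ^ n / (c * real n powr (1 + eps))\<rfloor>"

definition Ytop :: "real \<Rightarrow> nat \<Rightarrow> int" where
  "Ytop eps n = \<lfloor>2 ^ n / real n powr eps\<rfloor>"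

definition Qsq :: "real \<Rightarrow> real \<Rightarrow> nat \<Rightarrow> pt set" where
  "Qsq eps c n = {(x, y). 2 ^ n \<le> x \<and> x \<le> 2 ^ n + int (side eps c n) \<and>
      Ytop eps n - int (side eps c n) \<le> y \<and> y \<le> Ytop eps n}"

definition pr :: "real \<Rightarrow> real \<Rightarrow> nat \<Rightarrow> nat" where
  "pr eps c n = (GREATEST q. prime q \<and> q < side eps c n)"

definition parab :: "real \<Rightarrow> real \<Rightarrow> nat \<Rightarrow> int \<Rightarrow> int \<Rightarrow> pt set" where
  "parab eps c n a b = {(2 ^ n + x, Ytop eps n - y) | x y.
      0 \<le> x \<and> x < int (pr eps c n) \<and> 0 \<le> y \<and> y < int (pr eps c n) \<and>
      y mod int (pr eps c n) = ((x - a) ^ 2 + b) mod int (pr eps c n)}"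

definition collinear3 :: "pt \<Rightarrow> pt \<Rightarrow> pt \<Rightarrow> bool" where
  "collinear3 p q r \<longleftrightarrow>
     (fst q - fst p) * (snd r - snd p) = (snd q - snd p) * (fst r - fst p)"

definition mixed_triples :: "pt set \<Rightarrow> pt set \<Rightarrow> pt set set" where
  "mixed_triples A B = {T. T \<subseteq> A \<union> B \<and> card T = 3 \<and>
      (\<exists>p q r. T = {p, q, r} \<and> collinear3 p q r) \<and> T \<inter> A \<noteq> {} \<and> T \<inter> B \<noteq> {}}"

definition S_before :: "real \<Rightarrow> real \<Rightarrow> nat \<Rightarrow> pt set \<Rightarrow> nat \<Rightarrow> pt set" where
  "S_before eps c n0 S n = S \<inter> (\<Union>m\<in>{n0..<n}. Qsq eps c m)"

definition valid_construction ::
  "real \<Rightarrow> real \<Rightarrow> nat \<Rightarrow> (nat \<Rightarrow> int) \<Rightarrow> (nat \<Rightarrow> int) \<Rightarrow> pt set \<Rightarrow> bool" where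
  "valid_construction eps c n0 a b S \<longleftrightarrow>
     S \<subseteq> (\<Union>n\<in>{n0..}. Qsq eps c n) \<and>
     (\<forall>n\<ge>n0.
        0 \<le> a n \<and> a n < int (pr eps c n) \<and> 0 \<le> b n \<and> b n < int (pr eps c n) \<and>
        (\<forall>a' b'. 0 \<le> a' \<and> a' < int (pr eps c n) \<and> 0 \<le> b' \<and> b' < int (pr eps c n) \<longrightarrow>
           card (mixed_triples (parab eps c n (a n) (b n)) (S_before eps c n0 S n))
             \<le> card (mixed_triples (parab eps c n a' b') (S_before eps c n0 S n))) \<and>
        (\<exists>f. (\<forall>T\<in>mixed_triples (parab eps c n (a n) (b n)) (S_before eps c n0 S n).
                  f T \<in> T \<inter> parab eps c n (a n) (b n)) \<and>
             S \<inter> Qsq eps c n = parab eps c n (a n) (b n)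
               - f ` mixed_triples (parab eps c n (a n) (b n)) (S_before eps c n0 S n)))"

definition red :: "real \<Rightarrow> real \<Rightarrow> pt set \<Rightarrow> nat \<Rightarrow> pt set" where
  "red eps c S n = {z \<in> Qsq eps c n. \<exists>m<n. \<exists>u v.
      u \<in> S \<inter> Qsq eps c m \<and> v \<in> S \<inter> Qsq eps c m \<and> u \<noteq> v \<and> collinear3 z u v}"

end

theory Submission
  imports Defs "HOL-Analysis.Harmonic_Numbers" "HOL-Real_Asymp.Real_Asymp"
begin


lemma parab_unique:
  fixes p :: nat and a b x y x' y' dx dy :: int
  assumes pr: "prime p" and d1: "2 \<le> dx" and d2: "dx < int p"
   and x: "0 \<le> x" "x < int p" and x': "0 \<le> x'" "x' < int p"
   and y: "0 \<le> y" "y < int p" and y': "0 \<le> y'" "y' < int p"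
   and c1: "y mod int p = ((x - a)^2 + b) mod int p"
   and c2: "(y - dy) mod int p = ((x + dx - a)^2 + b) mod int p"
   and c3: "y' mod int p = ((x' - a)^2 + b) mod int p"
   and c4: "(y' - dy) mod int p = ((x' + dx - a)^2 + b) mod int p"
  shows "x = x' \<and> y = y'"
proof -
  let ?p = "int p"
  have e1: "?p dvd y - ((x - a)^2 + b)" using c1 by (simp add: mod_eq_dvd_iff)
  have e2: "?p dvd (y - dy) - ((x + dx - a)^2 + b)" using c2 by (simp add: mod_eq_dvd_iff)
  have e3: "?p dvd y' - ((x' - a)^2 + b)" using c3 by (simp add: mod_eq_dvd_iff)
  have e4: "?p dvd (y' - dy) - ((x' + dx - a)^2 + b)" using c4 by (simp add: mod_eq_dvd_iff)
  have "?p dvd (y - ((x - a)^2 + b)) - ((y - dy) - ((x + dx - a)^2 + b))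
              - ((y' - ((x' - a)^2 + b)) - ((y' - dy) - ((x' + dx - a)^2 + b)))"
    using dvd_diff[OF dvd_diff[OF e1 e2] dvd_diff[OF e3 e4]] .
  also have "(y - ((x - a)^2 + b)) - ((y - dy) - ((x + dx - a)^2 + b))
              - ((y' - ((x' - a)^2 + b)) - ((y' - dy) - ((x' + dx - a)^2 + b))) = (2 * dx) * (x - x')"
    by (simp add: power2_eq_square algebra_simps)
  finally have dv: "?p dvd (2 * dx) * (x - x')" .
  have pp: "prime ?p" using pr by simp
  have "\<not> ?p dvd 2 * dx"
  proof
    assume "?p dvd 2 * dx"
    then have "?p dvd 2 \<or> ?p dvd dx" using pp prime_dvd_mult_iff by blast
    moreover have "\<not> ?p dvd 2" using d1 d2 by (auto dest: zdvd_imp_le)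
    moreover have "\<not> ?p dvd dx" using d1 d2 by (auto dest: zdvd_imp_le)
    ultimately show False by blast
  qed
  then have "?p dvd x - x'" using dv pp prime_dvd_mult_iff by blast
  then have "x mod ?p = x' mod ?p" by (simp add: mod_eq_dvd_iff)
  then have xx: "x = x'" using x x' by simp
  have "y mod ?p = y' mod ?p" using c1 c3 xx by simp
  then have "y = y'" using y y' by simp
  with xx show ?thesis by simp
qed

definition Wset :: "nat \<Rightarrow> real \<Rightarrow> real \<Rightarrow> (int \<times> int) set" where
  "Wset p lo hi = {(k, j). 1 \<le> k \<and> k < int p \<and> coprime k j \<and>
     lo \<le> real_of_int j / real_of_int k \<and> real_of_int j / real_of_int k \<le> hi}"

lemma Wset_props:
  assumes "(k, j) \<in> Wset p lo hi" "0 < lo" "hi < 1"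
  shows "2 \<le> k" "1 \<le> j" "j < k" "k < int p" "coprime k j"
    "lo \<le> real_of_int j / real_of_int k" "real_of_int j / real_of_int k \<le> hi"
proof -
  have k1: "1 \<le> k" and kp: "k < int p" and cop: "coprime k j"
    and l: "lo \<le> real_of_int j / real_of_int k" and h: "real_of_int j / real_of_int k \<le> hi"
    using assms(1) unfolding Wset_def by auto
  have kpos: "real_of_int k > 0" using k1 by simp
  have "real_of_int j / real_of_int k > 0" using l assms(2) by linarith
  then have "real_of_int j > 0" using kpos by (simp add: zero_less_divide_iff)
  then show j1: "1 \<le> j" by simp
  have "real_of_int j / real_of_int k < 1" using h assms(3) by linarith
  then have "real_of_int j < real_of_int k" using kpos by (simp add: divide_less_eq)
  then show jk: "j < k" by simp
  show "2 \<le> k" using j1 jk by simp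
  show "k < int p" "coprime k j" "lo \<le> real_of_int j / real_of_int k"
    "real_of_int j / real_of_int k \<le> hi" using kp cop l h by auto
qed

lemma Wset_finite:
  assumes "0 < lo" "hi < 1"
  shows "finite (Wset p lo hi)"
proof -
  have "Wset p lo hi \<subseteq> {1..int p} \<times> {1..int p}"
  proof
    fix w assume w: "w \<in> Wset p lo hi"
    obtain k j where kj: "w = (k, j)" by (cases w)
    show "w \<in> {1..int p} \<times> {1..int p}"
      using Wset_props[OF w[unfolded kj] assms] kj by auto
  qed
  then show ?thesis by (rule finite_subset) auto
qed


definition isparab :: "nat \<Rightarrow> int \<Rightarrow> int \<Rightarrow> int \<Rightarrow> int \<Rightarrow> (int \<times> int) \<Rightarrow> bool" where
  "isparab p X0 Y0 a b u \<longleftrightarrow> (\<exists>x y. u = (X0 + x, Y0 - y) \<and> 0 \<le> x \<and> x < int p \<and> 0 \<le> y \<and> y < int p \<and>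
      y mod int p = ((x - a)^2 + b) mod int p)"

lemma isparab_unique:
  assumes pr: "prime p" and d1: "2 \<le> dx" and d2: "dx < int p"
    and u: "isparab p X0 Y0 a b u" and u2: "isparab p X0 Y0 a b (fst u + dx, snd u + dy)"
    and v: "isparab p X0 Y0 a b v" and v2: "isparab p X0 Y0 a b (fst v + dx, snd v + dy)"
  shows "u = v"
proof -
  obtain x y where xy: "u = (X0 + x, Y0 - y)" "0 \<le> x" "x < int p" "0 \<le> y" "y < int p"
      "y mod int p = ((x - a)^2 + b) mod int p" using u unfolding isparab_def by blast
  obtain x2 y2 where xy2: "(fst u + dx, snd u + dy) = (X0 + x2, Y0 - y2)" "0 \<le> x2" "x2 < int p" "0 \<le> y2" "y2 < int p"
      "y2 mod int p = ((x2 - a)^2 + b) mod int p" using u2 unfolding isparab_def by blast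
  obtain x' y' where xy': "v = (X0 + x', Y0 - y')" "0 \<le> x'" "x' < int p" "0 \<le> y'" "y' < int p"
      "y' mod int p = ((x' - a)^2 + b) mod int p" using v unfolding isparab_def by blast
  obtain x2' y2' where xy2': "(fst v + dx, snd v + dy) = (X0 + x2', Y0 - y2')" "0 \<le> x2'" "x2' < int p" "0 \<le> y2'" "y2' < int p"
      "y2' mod int p = ((x2' - a)^2 + b) mod int p" using v2 unfolding isparab_def by blast
  have "x2 = x + dx" "y2 = y - dy" using xy(1) xy2(1) by auto
  have "x2' = x' + dx" "y2' = y' - dy" using xy'(1) xy2'(1) by auto
  have "x = x' \<and> y = y'"
    apply (rule parab_unique[OF pr d1 d2, of x x' y y' a b dy])
    using xy xy' xy2 xy2' \<open>x2 = x + dx\<close> \<open>y2 = y - dy\<close> \<open>x2' = x' + dx\<close> \<open>y2' = y' - dy\<close> by auto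
  then show ?thesis using xy(1) xy'(1) by simp
qed

lemma isparab_x: "isparab p X0 Y0 a b u \<Longrightarrow> X0 \<le> fst u \<and> fst u < X0 + int p"
  unfolding isparab_def by auto

lemma red_decomp:
  fixes P Q :: "(int \<times> int) set" and p :: nat and X0 Y0 a b :: int and lo hi :: real
  assumes P: "\<And>u. u \<in> P \<Longrightarrow> isparab p X0 Y0 a b u"
    and sl: "\<And>u z. u \<in> P \<Longrightarrow> z \<in> Q \<Longrightarrow> fst u < fst z \<and>
        lo \<le> real_of_int (snd z - snd u) / real_of_int (fst z - fst u) \<and>
        real_of_int (snd z - snd u) / real_of_int (fst z - fst u) \<le> hi"
    and z: "z \<in> Q" and u: "u \<in> P" and v: "v \<in> P" and uv: "fst u < fst v"
    and col: "collinear3 z u v"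
  shows "\<exists>k j t r. (k, j) \<in> Wset p lo hi \<and> 1 \<le> t \<and> t \<le> (int p - 1) div k \<and>
            (fst u + t * k, snd u + t * j) \<in> P \<and> z = (fst u + r * k, snd u + r * j)"
proof -
  define dx where "dx = fst v - fst u"
  define dy where "dy = snd v - snd u"
  define A where "A = fst z - fst u"
  define B where "B = snd z - snd u"
  have dx0: "dx > 0" using uv dx_def by simp
  have A0: "A > 0" using sl[OF u z] A_def by simp
  have eq: "A * dy = B * dx"
    using col unfolding collinear3_def A_def B_def dx_def dy_def by (simp add: algebra_simps)
  define g where "g = gcd dx dy"
  have g0: "g > 0" using dx0 g_def by simp
  define k where "k = dx div g"
  define j where "j = dy div g"
  have dxg: "dx = g * k" unfolding k_def g_def by simp
  have dyg: "dy = g * j" unfolding j_def g_def by simp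
  have cop: "coprime k j" unfolding k_def j_def g_def
    using div_gcd_coprime[of dx dy] dx0 by simp
  have k0: "k > 0" using dx0 g0 dxg by (simp add: zero_less_mult_iff)
  have eq2: "A * j = B * k" using eq dxg dyg g0 by (simp add: algebra_simps)
  have "k dvd A * j" using eq2 by simp
  then have "k dvd A" using cop by (simp add: coprime_dvd_mult_left_iff)
  then obtain r where r: "A = k * r" by (auto elim: dvdE)
  have "B * k = (r * j) * k" by (metis eq2 r mult.assoc mult.commute)
  then have "B = r * j" using k0 by simp
  then have Br: "B = r * j" by simp
  have zr: "z = (fst u + r * k, snd u + r * j)"
    using r Br A_def B_def by (cases z) (simp add: algebra_simps)
  have vx: "fst v < X0 + int p" "X0 \<le> fst u" using isparab_x[OF P[OF v]] isparab_x[OF P[OF u]] by auto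
  have dxp: "dx \<le> int p - 1" using vx dx_def by simp
  have kdx: "k \<le> dx" using dxg g0 k0 by (simp add: mult_le_cancel_right1 )
  have "real_of_int j / real_of_int k = real_of_int B / real_of_int A"
  proof -
    have "real_of_int A * real_of_int j = real_of_int B * real_of_int k"
      using eq2 by (metis of_int_mult)
    then show ?thesis using k0 A0 by (simp add: field_simps)
  qed
  then have sl2: "lo \<le> real_of_int j / real_of_int k" "real_of_int j / real_of_int k \<le> hi"
    using sl[OF u z] A_def B_def by auto
  have W: "(k, j) \<in> Wset p lo hi"
    unfolding Wset_def using k0 kdx dxp cop sl2 by auto
  have t1: "g \<le> (int p - 1) div k"
  proof -
    have "(g * k) div k \<le> (int p - 1) div k" using dxg dxp k0 by (intro zdiv_mono1) auto
    then show ?thesis using k0 by simp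
  qed
  have vP: "(fst u + g * k, snd u + g * j) \<in> P"
    using v dxg dyg dx_def dy_def by (cases v) (auto simp: algebra_simps)
  show ?thesis using W g0 t1 vP zr by (intro exI[of _ k] exI[of _ j] exI[of _ g] exI[of _ r]) auto
qed


lemma card_line_part:
  fixes L :: "(int \<times> int) set" and k j XX :: int and s :: nat and uu :: "int \<times> int"
  assumes k0: "k > 0"
    and L: "\<And>z. z \<in> L \<Longrightarrow> (\<exists>r. z = (fst uu + r * k, snd uu + r * j)) \<and> XX \<le> fst z \<and> fst z \<le> XX + int s"
  shows "card L \<le> nat (int s div k) + 1"
proof -
  define \<phi> where "\<phi> z = (fst z - XX) div k" for z :: "int \<times> int"
  have inj: "inj_on \<phi> L"
  proof
    fix z z' assume z: "z \<in> L" and z': "z' \<in> L" and e: "\<phi> z = \<phi> z'"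
    obtain r where r: "z = (fst uu + r * k, snd uu + r * j)" using L[OF z] by blast
    obtain r' where r': "z' = (fst uu + r' * k, snd uu + r' * j)" using L[OF z'] by blast
    have "\<phi> z = ((fst uu - XX) + r * k) div k" unfolding \<phi>_def r by (simp add: algebra_simps)
    also have "\<dots> = r + (fst uu - XX) div k" by (rule div_mult_self1) (use k0 in simp)
    finally have A1: "\<phi> z = (fst uu - XX) div k + r" by simp
    have "\<phi> z' = ((fst uu - XX) + r' * k) div k" unfolding \<phi>_def r' by (simp add: algebra_simps)
    also have "\<dots> = r' + (fst uu - XX) div k" by (rule div_mult_self1) (use k0 in simp)
    finally have "\<phi> z' = (fst uu - XX) div k + r'" by simp
    then have "r = r'" using e A1 by simp
    then show "z = z'" using r r' by simp
  qed
  have img: "\<phi> ` L \<subseteq> {0..int s div k}"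
  proof
    fix w assume "w \<in> \<phi> ` L"
    then obtain z where z: "z \<in> L" and w: "w = \<phi> z" by blast
    have "0 \<le> fst z - XX" "fst z - XX \<le> int s" using L[OF z] by auto
    then have "0 \<le> (fst z - XX) div k" "(fst z - XX) div k \<le> int s div k"
      using k0 by (auto intro: zdiv_mono1 pos_imp_zdiv_nonneg_iff[THEN iffD2])
    then show "w \<in> {0..int s div k}" using w \<phi>_def by simp
  qed
  have "card L = card (\<phi> ` L)" using inj by (simp add: card_image)
  also have "\<dots> \<le> card {0..int s div k}" using img by (intro card_mono) auto
  also have "\<dots> = nat (int s div k) + 1"
  proof -
    have "0 \<le> int s div k" using k0 by (simp add: pos_imp_zdiv_nonneg_iff)
    then show ?thesis by simp
  qed
  finally show ?thesis .
qed

lemma red_card: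
  fixes P Q :: "(int \<times> int) set" and p s :: nat and X0 Y0 a b X1 :: int and lo hi :: real
  assumes pr: "prime p"
    and P: "\<And>u. u \<in> P \<Longrightarrow> isparab p X0 Y0 a b u"
    and Qf: "finite Q" and Qx: "\<And>z. z \<in> Q \<Longrightarrow> X1 \<le> fst z \<and> fst z \<le> X1 + int s"
    and sl: "\<And>u z. u \<in> P \<Longrightarrow> z \<in> Q \<Longrightarrow> fst u < fst z \<and>
        lo \<le> real_of_int (snd z - snd u) / real_of_int (fst z - fst u) \<and>
        real_of_int (snd z - snd u) / real_of_int (fst z - fst u) \<le> hi"
    and lo: "0 < lo" and hi: "hi < 1"
  shows "real (card {z\<in>Q. \<exists>u v. u \<in> P \<and> v \<in> P \<and> u \<noteq> v \<and> collinear3 z u v})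
     \<le> (\<Sum>w\<in>Wset p lo hi. real p / real_of_int (fst w) * (real s / real_of_int (fst w) + 1))"
proof -
  define W where "W = Wset p lo hi"
  have Wf: "finite W" using Wset_finite[OF lo hi] W_def by simp
  define L where "L k j t = {z\<in>Q. \<exists>u\<in>P. (fst u + t * k, snd u + t * j) \<in> P \<and>
                       (\<exists>r. z = (fst u + r * k, snd u + r * j))}" for k j t :: int
  define T where "T k = {1..(int p - 1) div k}" for k :: int
  let ?R = "{z\<in>Q. \<exists>u v. u \<in> P \<and> v \<in> P \<and> u \<noteq> v \<and> collinear3 z u v}"
  have sub: "?R \<subseteq> (\<Union>w\<in>W. \<Union>t\<in>T (fst w). L (fst w) (snd w) t)"
  proof
    fix z assume "z \<in> ?R"
    then obtain u v where z: "z \<in> Q" and u: "u \<in> P" and v: "v \<in> P" and uv: "u \<noteq> v"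
      and col: "collinear3 z u v" by blast
    have main: "z \<in> (\<Union>w\<in>W. \<Union>t\<in>T (fst w). L (fst w) (snd w) t)"
      if u': "u' \<in> P" and v': "v' \<in> P" and lt: "fst u' < fst v'" and col': "collinear3 z u' v'" for u' v'
    proof -
      obtain k j t r where kj: "(k, j) \<in> Wset p lo hi" and t: "1 \<le> t" "t \<le> (int p - 1) div k"
        and vP: "(fst u' + t * k, snd u' + t * j) \<in> P" and zr: "z = (fst u' + r * k, snd u' + r * j)"
        using red_decomp[OF P sl z u' v' lt col'] by blast
      have "z \<in> L k j t" unfolding L_def using z u' vP zr by blast
      then show ?thesis using kj t unfolding W_def T_def by force
    qed
    consider "fst u < fst v" | "fst v < fst u" | "fst u = fst v" by linarith
    then show "z \<in> (\<Union>w\<in>W. \<Union>t\<in>T (fst w). L (fst w) (snd w) t)"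
    proof cases
      case 1 then show ?thesis using main[OF u v _ col] by simp
    next
      case 2
      have "collinear3 z v u" using col unfolding collinear3_def by (simp add: algebra_simps)
      then show ?thesis using main[OF v u 2] by simp
    next
      case 3
      have "fst u < fst z" using sl[OF u z] by simp
      have "(fst u - fst z) * (snd v - snd z) = (snd u - snd z) * (fst u - fst z)"
        using col 3 unfolding collinear3_def by simp
      then have "(fst u - fst z) * (snd v - snd u) = 0" by (simp add: algebra_simps)
      then have "snd v = snd u" using \<open>fst u < fst z\<close> by simp
      then have "u = v" using 3 by (simp add: prod_eq_iff)
      then show ?thesis using uv by simp
    qed
  qed
  have cardL: "card (L k j t) \<le> nat (int s div k) + 1"
    if kj: "(k, j) \<in> W" and t: "t \<in> T k" for k j t
  proof (cases "L k j t = {}")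
    case True then show ?thesis by simp
  next
    case False
    then obtain z0 where "z0 \<in> L k j t" by blast
    then obtain u0 where u0: "u0 \<in> P" "(fst u0 + t * k, snd u0 + t * j) \<in> P" unfolding L_def by blast
    have k2: "2 \<le> k" and kp: "k < int p" using Wset_props[OF kj[unfolded W_def] lo hi] by auto
    have t1: "1 \<le> t" and tk: "t \<le> (int p - 1) div k" using t unfolding T_def by auto
    have "t * k \<le> (int p - 1) div k * k" using tk k2 by (intro mult_right_mono) auto
    also have "\<dots> \<le> int p - 1"
    proof -
      have "(int p - 1) div k * k + (int p - 1) mod k = int p - 1" by (rule div_mult_mod_eq)
      moreover have "0 \<le> (int p - 1) mod k" using k2 by simp
      ultimately show ?thesis by linarith
    qed
    finally have tkp: "t * k < int p" by simp
    have tk1: "k \<le> t * k" using t1 k2 by (simp add: mult_le_cancel_right1)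
    have tk2: "2 \<le> t * k" using k2 tk1 by linarith
    show ?thesis
    proof (rule card_line_part[where k=k and j=j and uu=u0 and XX=X1])
      show "k > 0" using k2 by simp
    next
      fix z assume z: "z \<in> L k j t"
      then obtain u where u: "u \<in> P" "(fst u + t * k, snd u + t * j) \<in> P"
        and r: "\<exists>r. z = (fst u + r * k, snd u + r * j)" and zQ: "z \<in> Q" unfolding L_def by blast
      have "u = u0"
        by (rule isparab_unique[OF pr tk2 tkp P[OF u(1)] P[OF u(2)] P[OF u0(1)] P[OF u0(2)]])
      then show "(\<exists>r. z = (fst u0 + r * k, snd u0 + r * j)) \<and> X1 \<le> fst z \<and> fst z \<le> X1 + int s"
        using r Qx[OF zQ] by blast
    qed
  qed
  have finL: "finite (L k j t)" for k j t unfolding L_def using Qf by simp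
  have "card ?R \<le> card (\<Union>w\<in>W. \<Union>t\<in>T (fst w). L (fst w) (snd w) t)"
    using sub Wf finL by (intro card_mono) (auto simp: T_def)
  also have "\<dots> \<le> (\<Sum>w\<in>W. card (\<Union>t\<in>T (fst w). L (fst w) (snd w) t))"
    using Wf by (rule card_UN_le)
  also have "\<dots> \<le> (\<Sum>w\<in>W. (\<Sum>t\<in>T (fst w). card (L (fst w) (snd w) t)))"
    by (intro sum_mono card_UN_le) (auto simp: T_def)
  finally have c1: "real (card ?R) \<le> real (\<Sum>w\<in>W. (\<Sum>t\<in>T (fst w). card (L (fst w) (snd w) t)))"
    by linarith
  also have "\<dots> = (\<Sum>w\<in>W. (\<Sum>t\<in>T (fst w). real (card (L (fst w) (snd w) t))))" by simp
  also have "\<dots> \<le> (\<Sum>w\<in>W. real p / real_of_int (fst w) * (real s / real_of_int (fst w) + 1))"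
  proof (rule sum_mono)
    fix w assume w: "w \<in> W"
    obtain k j where kj: "w = (k, j)" by (cases w)
    have k2: "2 \<le> k" using Wset_props[OF w[unfolded kj W_def] lo hi] by auto
    have kpos: "real_of_int k > 0" using k2 by simp
    have "(\<Sum>t\<in>T k. real (card (L k j t))) \<le> (\<Sum>t\<in>T k. real (nat (int s div k)) + 1)"
    proof (rule sum_mono)
      fix t assume t: "t \<in> T k"
      have "card (L k j t) \<le> nat (int s div k) + 1" using cardL w kj t by simp
      then have "real (card (L k j t)) \<le> real (nat (int s div k) + 1)" by (simp only: of_nat_le_iff)
      then show "real (card (L k j t)) \<le> real (nat (int s div k)) + 1" by simp
    qed
    also have "\<dots> = real (card (T k)) * (real (nat (int s div k)) + 1)" by simp
    also have "\<dots> \<le> real p / real_of_int k * (real s / real_of_int k + 1)"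
    proof (rule mult_mono)
      have "card (T k) = nat ((int p - 1) div k)" unfolding T_def by simp
      also have "real \<dots> \<le> real p / real_of_int k"
      proof -
        have "real_of_int ((int p - 1) div k) \<le> real_of_int (int p - 1) / real_of_int k"
          by (metis floor_divide_of_int_eq of_int_floor_le)
        also have "\<dots> \<le> real p / real_of_int k" using kpos by (simp add: divide_right_mono)
        moreover have "0 \<le> (int p - 1) div k" using pr k2 prime_gt_0_nat
          by (simp add: pos_imp_zdiv_nonneg_iff)
        ultimately show ?thesis by simp
      qed
      finally show "real (card (T k)) \<le> real p / real_of_int k" by simp
    next
      have "real_of_int (int s div k) \<le> real_of_int (int s) / real_of_int k"
        by (metis floor_divide_of_int_eq of_int_floor_le)
      moreover have "real (nat (int s div k)) = real_of_int (int s div k)"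
        using k2 by (simp add: pos_imp_zdiv_nonneg_iff)
      ultimately show "real (nat (int s div k)) + 1 \<le> real s / real_of_int k + 1" by simp
    qed (use kpos in auto)
    finally show "(\<Sum>t\<in>T (fst w). real (card (L (fst w) (snd w) t)))
        \<le> real p / real_of_int (fst w) * (real s / real_of_int (fst w) + 1)" using kj by simp
  qed
  finally show ?thesis unfolding W_def .
qed



lemma inv_sq_sum_nat:
  assumes "2 \<le> N" "N \<le> M + 1"
  shows "(\<Sum>n\<in>{N..M}. 1 / (real n)^2) \<le> 1 / (real N - 1) - 1 / real M"
  using assms(2)
proof (induction M)
  case 0
  then show ?case using assms(1) by simp
next
  case (Suc M)
  show ?case
  proof (cases "N = Suc M + 1")
    case True
    then show ?thesis using assms(1) by (simp add: field_simps)
  next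
    case False
    then have NM: "N \<le> M + 1" using Suc.prems by simp
    have IH: "(\<Sum>n\<in>{N..M}. 1 / (real n)^2) \<le> 1 / (real N - 1) - 1 / real M" using Suc.IH[OF NM] .
    have NSM: "N \<le> Suc M" using NM by simp
    have "(\<Sum>n\<in>{N..Suc M}. 1 / (real n)^2) = (\<Sum>n\<in>{N..M}. 1 / (real n)^2) + 1 / (real (Suc M))^2"
      using NSM by (simp add: sum.cl_ivl_Suc)
    also have "\<dots> \<le> 1 / (real N - 1) - 1 / real M + 1 / (real (Suc M))^2" using IH by simp
    also have "\<dots> \<le> 1 / (real N - 1) - 1 / real (Suc M)"
    proof (cases "M = 0")
      case True
      then show ?thesis using NM assms(1) by simp
    next
      case False
      then have Mp: "real M > 0" by simp
      have e: "1 / real M - 1 / real (Suc M) = 1 / (real M * real (Suc M))"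
        using Mp by (simp add: field_simps)
      have "real M * real (Suc M) \<le> (real (Suc M))^2" by (simp add: power2_eq_square)
      then have "1 / (real (Suc M))^2 \<le> 1 / (real M * real (Suc M))"
        using Mp by (intro divide_left_mono) auto
      then have "1 / (real (Suc M))^2 \<le> 1 / real M - 1 / real (Suc M)" using e by simp
      then show ?thesis by simp
    qed
    finally show ?thesis .
  qed
qed

lemma inv_sq_sum_nat':
  assumes "2 \<le> N"
  shows "(\<Sum>n\<in>{N..M}. 1 / (real n)^2) \<le> 1 / (real N - 1)"
proof (cases "N \<le> M + 1")
  case True
  have "0 \<le> 1 / real M" by simp
  then show ?thesis using inv_sq_sum_nat[OF assms True] by linarith
next
  case False
  then have "{N..M} = {}" by auto
  then show ?thesis using assms by simp
qed

lemma harm_le_ln: "n > 0 \<Longrightarrow> (harm n :: real) \<le> ln (real n) + 1"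
  using euler_mascheroni_sequence_decreasing[of 1 n] by (simp add: harm_def)


lemma coprime_frac_eq:
  fixes k j k' j' :: int
  assumes "coprime k j" "coprime k' j'" "k > 0" "k' > 0" "j * k' = j' * k"
  shows "k = k' \<and> j = j'"
proof -
  have "k dvd j * k'" using assms(5) by simp
  then have a: "k dvd k'" using assms(1) by (metis coprime_dvd_mult_right_iff)
  have "k' dvd j' * k" using assms(5) by (metis dvd_triv_right)
  then have b: "k' dvd k" using assms(2) by (metis coprime_dvd_mult_right_iff)
  have "k = k'" using a b assms(3,4) by (simp add: zdvd_antisym_nonneg)
  then show ?thesis using assms(3,5) by simp
qed

lemma card_W1:
  fixes p :: nat and lo hi K :: real
  assumes lo: "0 < lo" and hi: "hi < 1" and lh: "lo \<le> hi" and K: "0 < K"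
  shows "real (card {w \<in> Wset p lo hi. real_of_int (fst w) < K}) \<le> (hi - lo) * K^2 + 1"
proof -
  define W1 where "W1 = {w \<in> Wset p lo hi. real_of_int (fst w) < K}"
  define \<psi> where "\<psi> w = nat \<lfloor>(real_of_int (snd w) / real_of_int (fst w) - lo) * K^2\<rfloor>" for w :: "int \<times> int"
  have inj: "inj_on \<psi> W1"
  proof
    fix w w' assume w: "w \<in> W1" and w': "w' \<in> W1" and e: "\<psi> w = \<psi> w'"
    obtain k j where kj: "w = (k, j)" by (cases w)
    obtain k' j' where kj': "w' = (k', j')" by (cases w')
    have W: "(k, j) \<in> Wset p lo hi" "real_of_int k < K" using w kj W1_def by auto
    have W': "(k', j') \<in> Wset p lo hi" "real_of_int k' < K" using w' kj' W1_def by auto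
    note P = Wset_props[OF W(1) lo hi] and P' = Wset_props[OF W'(1) lo hi]
    define a where "a = (real_of_int j / real_of_int k - lo) * K^2"
    define b where "b = (real_of_int j' / real_of_int k' - lo) * K^2"
    have a0: "0 \<le> a" unfolding a_def using P by simp
    have b0: "0 \<le> b" unfolding b_def using P' by simp
    have "nat \<lfloor>a\<rfloor> = nat \<lfloor>b\<rfloor>" using e kj kj' a_def b_def \<psi>_def by simp
    moreover have "0 \<le> \<lfloor>a\<rfloor>" "0 \<le> \<lfloor>b\<rfloor>" using a0 b0 by auto
    ultimately have "\<lfloor>a\<rfloor> = \<lfloor>b\<rfloor>" by (metis nat_eq_iff2)
    then have ab: "\<bar>a - b\<bar> < 1" by linarith
    show "w = w'"
    proof (rule ccontr)
      assume "w \<noteq> w'"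
      then have ne: "j * k' \<noteq> j' * k"
        using coprime_frac_eq[of k j k' j'] P P' kj kj' by auto
      have kp: "real_of_int k > 0" "real_of_int k' > 0" using P P' by auto
      define D where "D = real_of_int (j * k' - j' * k)"
      define q where "q = real_of_int k * real_of_int k'"
      have q0: "q > 0" using kp q_def by simp
      have "a - b = D * (K^2 / q)"
        unfolding a_def b_def D_def q_def using kp by (simp add: field_simps)
      then have "\<bar>a - b\<bar> = \<bar>D\<bar> * (K^2 / q)" using q0 by (simp add: abs_mult)
      moreover have "\<bar>D\<bar> \<ge> 1" using ne D_def by linarith
      ultimately have "\<bar>a - b\<bar> \<ge> 1 * (K^2 / q)"
        by (metis mult_right_mono q0 divide_nonneg_pos zero_le_power2 less_imp_le)
      then have ge: "\<bar>a - b\<bar> \<ge> K^2 / (real_of_int k * real_of_int k')" using q_def by simp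
      have "real_of_int k * real_of_int k' < K^2"
        using kp W(2) W'(2) by (simp add: power2_eq_square mult_strict_mono)
      moreover have "K^2 / (real_of_int k * real_of_int k') > 1"
        using kp \<open>real_of_int k * real_of_int k' < K^2\<close> by simp
      ultimately show False using ab ge by linarith
    qed
  qed
  have img: "\<psi> ` W1 \<subseteq> {0..nat \<lfloor>(hi - lo) * K^2\<rfloor>}"
  proof
    fix x assume "x \<in> \<psi> ` W1"
    then obtain w where w: "w \<in> W1" and x: "x = \<psi> w" by blast
    obtain k j where kj: "w = (k, j)" by (cases w)
    have W: "(k, j) \<in> Wset p lo hi" using w kj W1_def by auto
    note P = Wset_props[OF W lo hi]
    have "(real_of_int j / real_of_int k - lo) * K^2 \<le> (hi - lo) * K^2"
      using P by (intro mult_right_mono) auto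
    then have "\<lfloor>(real_of_int j / real_of_int k - lo) * K^2\<rfloor> \<le> \<lfloor>(hi - lo) * K^2\<rfloor>"
      by (rule floor_mono)
    then show "x \<in> {0..nat \<lfloor>(hi - lo) * K^2\<rfloor>}" using x kj \<psi>_def by (simp add: nat_mono)
  qed
  have "card W1 = card (\<psi> ` W1)" using inj by (simp add: card_image)
  also have "\<dots> \<le> card {0..nat \<lfloor>(hi - lo) * K^2\<rfloor>}" using img by (intro card_mono) auto
  also have "\<dots> = nat \<lfloor>(hi - lo) * K^2\<rfloor> + 1" by simp
  finally have "real (card W1) \<le> real (nat \<lfloor>(hi - lo) * K^2\<rfloor>) + 1" by linarith
  also have "\<dots> \<le> (hi - lo) * K^2 + 1"
  proof -
    have "0 \<le> (hi - lo) * K^2" using lh by simp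
    then show ?thesis by linarith
  qed
  finally show ?thesis unfolding W1_def .
qed


lemma card_J:
  fixes k :: int and lo hi :: real
  assumes k: "k > 0" and lh: "lo \<le> hi"
  shows "finite {j. (k, j) \<in> Wset p lo hi}"
    "real (card {j. (k, j) \<in> Wset p lo hi}) \<le> real_of_int k * (hi - lo) + 1"
proof -
  let ?J = "{j. (k, j) \<in> Wset p lo hi}"
  have kp: "real_of_int k > 0" using k by simp
  have sub: "?J \<subseteq> {\<lceil>real_of_int k * lo\<rceil>..\<lfloor>real_of_int k * hi\<rfloor>}"
  proof
    fix j assume "j \<in> ?J"
    then have "lo \<le> real_of_int j / real_of_int k" "real_of_int j / real_of_int k \<le> hi"
      unfolding Wset_def by auto
    then have "real_of_int k * lo \<le> real_of_int j" "real_of_int j \<le> real_of_int k * hi"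
      using kp by (auto simp: field_simps)
    then show "j \<in> {\<lceil>real_of_int k * lo\<rceil>..\<lfloor>real_of_int k * hi\<rfloor>}"
      by (auto simp: ceiling_le_iff le_floor_iff)
  qed
  then show "finite ?J" by (rule finite_subset) auto
  have "card ?J \<le> card {\<lceil>real_of_int k * lo\<rceil>..\<lfloor>real_of_int k * hi\<rfloor>}" using sub by (intro card_mono) auto
  also have "\<dots> = nat (\<lfloor>real_of_int k * hi\<rfloor> + 1 - \<lceil>real_of_int k * lo\<rceil>)" by simp
  finally have c: "real (card ?J) \<le> real (nat (\<lfloor>real_of_int k * hi\<rfloor> + 1 - \<lceil>real_of_int k * lo\<rceil>))" by linarith
  have "real_of_int k * lo \<le> real_of_int k * hi" using kp lh by simp
  then have "real (nat (\<lfloor>real_of_int k * hi\<rfloor> + 1 - \<lceil>real_of_int k * lo\<rceil>)) \<le> real_of_int k * hi + 1 - real_of_int k * lo"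
    by (smt (verit) ceiling_correct floor_correct of_int_of_nat_eq of_nat_nat of_int_add of_int_diff of_int_1 nat_eq_iff2 of_nat_0)
  then show "real (card ?J) \<le> real_of_int k * (hi - lo) + 1" using c by (simp add: algebra_simps)
qed

lemma W_sum_bound:
  fixes p s :: nat and lo hi K :: real
  assumes lo: "0 < lo" and hi: "hi < 1" and lh: "lo \<le> hi" and K: "2 \<le> K" and p: "p > 0"
  shows "(\<Sum>w\<in>Wset p lo hi. real p / real_of_int (fst w) * (real s / real_of_int (fst w) + 1))
     \<le> real p * (((hi - lo) * K^2 + 1) * (hi * (real s * hi + 1)) + real s * (hi - lo) * (ln (real p) + 1)
          + real p * (hi - lo) + 2 * real s / K + (ln (real p) + 1))"
proof -
  define W where "W = Wset p lo hi"
  define f where "f k = real p / real_of_int k * (real s / real_of_int k + 1)" for k :: int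
  define \<delta> where "\<delta> = hi - lo"
  have d0: "0 \<le> \<delta>" using lh \<delta>_def by simp
  define W1 where "W1 = {w \<in> W. real_of_int (fst w) < K}"
  define W2 where "W2 = {w \<in> W. \<not> real_of_int (fst w) < K}"
  have Wf: "finite W" using Wset_finite[OF lo hi] W_def by simp
  have split: "(\<Sum>w\<in>W. f (fst w)) = (\<Sum>w\<in>W1. f (fst w)) + (\<Sum>w\<in>W2. f (fst w))"
  proof -
    have eqW: "W = W1 \<union> W2" by (auto simp: W1_def W2_def)
    have "finite W1" "finite W2" using Wf by (auto simp: W1_def W2_def)
    moreover have "W1 \<inter> W2 = {}" by (auto simp: W1_def W2_def)
    ultimately show ?thesis unfolding eqW by (rule sum.union_disjoint)
  qed
  have fnn: "f k \<ge> 0" if "k > 0" for k using that unfolding f_def by simp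
  have b1: "f (fst w) \<le> real p * (hi * (real s * hi + 1))" if w: "w \<in> W1" for w
  proof -
    obtain k j where kj: "w = (k, j)" by (cases w)
    have Wk: "(k, j) \<in> Wset p lo hi" using w kj W1_def W_def by auto
    note P = Wset_props[OF Wk lo hi]
    have kp: "real_of_int k > 0" using P by simp
    have "1 / real_of_int k \<le> real_of_int j / real_of_int k"
      using P kp by (intro divide_right_mono) auto
    then have ik: "1 / real_of_int k \<le> hi" using P by linarith
    have "f k = real p * (1 / real_of_int k) * (real s * (1 / real_of_int k) + 1)"
      unfolding f_def by simp
    also have "\<dots> \<le> real p * hi * (real s * hi + 1)"
    proof -
      have h0: "0 \<le> hi" using lo lh by simp
      have "real s * (1 / real_of_int k) \<le> real s * hi" using ik by (rule mult_left_mono) simp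
      then have "real s * (1 / real_of_int k) + 1 \<le> real s * hi + 1" by simp
      moreover have "real p * (1 / real_of_int k) \<le> real p * hi" using ik by (rule mult_left_mono) simp
      ultimately show ?thesis using kp h0 ik by (intro mult_mono) auto
    qed
    finally show ?thesis using kj by (simp add: algebra_simps)
  qed
  have "(\<Sum>w\<in>W1. f (fst w)) \<le> real (card W1) * (real p * (hi * (real s * hi + 1)))"
    using b1 by (rule sum_bounded_above)
  also have "\<dots> \<le> (\<delta> * K^2 + 1) * (real p * (hi * (real s * hi + 1)))"
  proof (rule mult_right_mono)
    show "real (card W1) \<le> \<delta> * K^2 + 1" using card_W1[OF lo hi lh, of K p] K W1_def W_def \<delta>_def by simp
    show "0 \<le> real p * (hi * (real s * hi + 1))" using lo lh by simp
  qed
  finally have part1: "(\<Sum>w\<in>W1. f (fst w)) \<le> (\<delta> * K^2 + 1) * (real p * (hi * (real s * hi + 1)))" .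
  define J where "J k = {j. (k, j) \<in> W}" for k
  define KK where "KK = {\<lceil>K\<rceil>..int p}"
  define N where "N = nat \<lceil>K\<rceil>"
  have N2: "2 \<le> N" using K N_def by linarith
  have NK: "K \<le> real N" using K N_def by linarith
  have KKpos: "k \<in> KK \<Longrightarrow> k > 0" for k using K KK_def by (auto simp: ceiling_le_iff)
  have Jf: "finite (J k)" if "k \<in> KK" for k using card_J[OF KKpos[OF that] lh] J_def W_def by simp
  have sub2: "W2 \<subseteq> Sigma KK J"
  proof
    fix w assume w: "w \<in> W2"
    obtain k j where kj: "w = (k, j)" by (cases w)
    have Wk: "(k, j) \<in> Wset p lo hi" "\<not> real_of_int k < K" using w kj W2_def W_def by auto
    note P = Wset_props[OF Wk(1) lo hi]
    have "\<lceil>K\<rceil> \<le> k" using Wk(2) by (simp add: ceiling_le_iff)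
    then show "w \<in> Sigma KK J" using kj P Wk J_def W_def KK_def by auto
  qed
  have "(\<Sum>w\<in>W2. f (fst w)) \<le> (\<Sum>w\<in>Sigma KK J. f (fst w))"
  proof (rule sum_mono2)
    show "finite (Sigma KK J)" using Jf KK_def by (intro finite_SigmaI) auto
    show "W2 \<subseteq> Sigma KK J" by (rule sub2)
    show "0 \<le> f (fst w)" if "w \<in> Sigma KK J - W2" for w using that KKpos fnn by auto
  qed
  also have "\<dots> = (\<Sum>k\<in>KK. \<Sum>j\<in>J k. f k)"
  proof -
    have "(\<Sum>w\<in>Sigma KK J. f (fst w)) = (\<Sum>(k, j)\<in>Sigma KK J. f k)"
      by (intro sum.cong) auto
    also have "\<dots> = (\<Sum>k\<in>KK. \<Sum>j\<in>J k. f k)"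
      using Jf KK_def by (subst sum.Sigma) auto
    finally show ?thesis .
  qed
  also have "\<dots> = (\<Sum>k\<in>KK. real (card (J k)) * f k)" by simp
  also have "\<dots> \<le> (\<Sum>k\<in>KK. (real_of_int k * \<delta> + 1) * f k)"
  proof (rule sum_mono)
    fix k assume k: "k \<in> KK"
    show "real (card (J k)) * f k \<le> (real_of_int k * \<delta> + 1) * f k"
      using card_J[OF KKpos[OF k] lh] fnn[OF KKpos[OF k]] J_def W_def \<delta>_def
      by (intro mult_right_mono) auto
  qed
  also have "\<dots> = (\<Sum>n\<in>{N..p}. (real n * \<delta> + 1) * f (int n))"
  proof -
    have cK: "0 \<le> \<lceil>K\<rceil>" using K by linarith
    have "KK = int ` {N..p}"
    proof
      show "KK \<subseteq> int ` {N..p}"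
      proof
        fix x assume x: "x \<in> KK"
        then have "\<lceil>K\<rceil> \<le> x" "x \<le> int p" unfolding KK_def by auto
        then have x0: "0 \<le> x" using cK by linarith
        have "x = int (nat x)" using x0 by simp
        moreover have "nat x \<in> {N..p}" unfolding N_def using \<open>\<lceil>K\<rceil> \<le> x\<close> \<open>x \<le> int p\<close> x0
          by (auto simp: ceiling_le_iff nat_le_iff)
        ultimately
        show "x \<in> int ` {N..p}" by blast
      qed
      show "int ` {N..p} \<subseteq> KK"
      proof
        fix x assume "x \<in> int ` {N..p}"
        then obtain n where n: "n \<in> {N..p}" "x = int n" by blast
        then show "x \<in> KK" using cK unfolding KK_def N_def by (auto simp: ceiling_le_iff)
      qed
    qed
    moreover have "inj_on int {N..p}" by simp
    ultimately show ?thesis by (simp add: sum.reindex)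
  qed
  also have "\<dots> = (\<Sum>n\<in>{N..p}. real p * real s * \<delta> * (1 / real n) + real p * \<delta>
                     + real p * real s * (1 / (real n)^2) + real p * (1 / real n))"
  proof (rule sum.cong)
    fix n assume n: "n \<in> {N..p}"
    then have "real n > 0" using N2 by simp
    then show "(real n * \<delta> + 1) * f (int n) = real p * real s * \<delta> * (1 / real n) + real p * \<delta>
                     + real p * real s * (1 / (real n)^2) + real p * (1 / real n)"
      unfolding f_def by (simp add: field_simps power2_eq_square)
  qed simp
  also have "\<dots> = real p * real s * \<delta> * (\<Sum>n\<in>{N..p}. 1 / real n) + real (card {N..p}) * (real p * \<delta>)
                 + real p * real s * (\<Sum>n\<in>{N..p}. 1 / (real n)^2) + real p * (\<Sum>n\<in>{N..p}. 1 / real n)"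
    by (simp add: sum.distrib sum_distrib_left)
  also have "\<dots> \<le> real p * real s * \<delta> * (ln (real p) + 1) + real p * (real p * \<delta>)
                 + real p * real s * (2 / K) + real p * (ln (real p) + 1)"
  proof -
    have h: "(\<Sum>n\<in>{N..p}. 1 / real n) \<le> ln (real p) + 1"
    proof -
      have "(\<Sum>n\<in>{N..p}. 1 / real n) \<le> (\<Sum>n\<in>{1..p}. 1 / real n)"
        using N2 by (intro sum_mono2) auto
      also have "\<dots> = harm p" unfolding harm_def by (simp add: divide_inverse)
      also have "\<dots> \<le> ln (real p) + 1" using harm_le_ln p by simp
      finally show ?thesis .
    qed
    have c: "real (card {N..p}) \<le> real p" using N2 by simp
    have q: "(\<Sum>n\<in>{N..p}. 1 / (real n)^2) \<le> 2 / K"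
    proof -
      have "(\<Sum>n\<in>{N..p}. 1 / (real n)^2) \<le> 1 / (real N - 1)" by (rule inv_sq_sum_nat'[OF N2])
      also have "\<dots> \<le> 2 / K"
      proof -
        have "K / 2 \<le> real N - 1" using NK K by linarith
        moreover have "K / 2 > 0" using K by simp
        ultimately have "1 / (real N - 1) \<le> 1 / (K / 2)" by (intro divide_left_mono) auto
        then show ?thesis by simp
      qed
      finally show ?thesis .
    qed
    have pp: "0 \<le> real p * real s * \<delta>" "0 \<le> real p * \<delta>" "0 \<le> real p * real s" "0 \<le> real p"
      using d0 by auto
    show ?thesis
      using mult_left_mono[OF h pp(1)] mult_right_mono[OF c pp(2)] mult_left_mono[OF q pp(3)]
        mult_left_mono[OF h pp(4)] by linarith
  qed
  finally have part2: "(\<Sum>w\<in>W2. f (fst w)) \<le> real p * real s * \<delta> * (ln (real p) + 1) + real p * (real p * \<delta>)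
                 + real p * real s * (2 / K) + real p * (ln (real p) + 1)" .
  have "(\<Sum>w\<in>W. f (fst w)) \<le> real p * ((\<delta> * K^2 + 1) * (hi * (real s * hi + 1)) + real s * \<delta> * (ln (real p) + 1)
          + real p * \<delta> + 2 * real s / K + (ln (real p) + 1))"
    using split part1 part2 by (simp add: algebra_simps)
  then show ?thesis unfolding W_def f_def \<delta>_def .
qed



lemma side_le:
  assumes "c > 0"
  shows "real (side eps c n) \<le> 2 ^ n / (c * real n powr (1 + eps))"
proof -
  have x0: "0 \<le> 2 ^ n / (c * real n powr (1 + eps))" using assms by simp
  then show ?thesis unfolding side_def by linarith
qed

lemma side_lt_pow:
  assumes "c > 1" "eps > 0"
  shows "side eps c n < 2 ^ n"
proof (cases "n = 0")
  case True then show ?thesis by (simp add: side_def)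
next
  case False
  then have "real n powr (1 + eps) \<ge> 1" using assms by (simp add: ge_one_powr_ge_zero)
  then have "c * 1 \<le> c * real n powr (1 + eps)" using assms by (intro mult_left_mono) auto
  then have "c * real n powr (1 + eps) > 1" using assms by linarith
  then have "2 ^ n / (c * real n powr (1 + eps)) < 2 ^ n" by (simp add: divide_less_eq)
  then have "real (side eps c n) < 2 ^ n" using side_le[of c eps n] assms by linarith
  then have "real (side eps c n) < real (2 ^ n)" by simp
  then show ?thesis by (simp only: of_nat_less_iff)
qed

lemma side_lt_pow_int:
  assumes "c > 1" "eps > 0"
  shows "int (side eps c n) < 2 ^ n"
proof -
  have "int (side eps c n) < int (2 ^ n)" using side_lt_pow[OF assms] by simp
  then show ?thesis by simp
qed

lemma Ytop_bounds:
  shows "0 \<le> Ytop eps n" "real_of_int (Ytop eps n) \<le> 2 ^ n / real n powr eps"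
    "2 ^ n / real n powr eps - 1 < real_of_int (Ytop eps n)"
proof -
  have "0 \<le> 2 ^ n / real n powr eps" by simp
  then show "0 \<le> Ytop eps n" unfolding Ytop_def by simp
  show "real_of_int (Ytop eps n) \<le> 2 ^ n / real n powr eps" unfolding Ytop_def by simp
  show "2 ^ n / real n powr eps - 1 < real_of_int (Ytop eps n)" unfolding Ytop_def by linarith
qed

lemma pr_props:
  assumes "side eps c n \<ge> 3"
  shows "prime (pr eps c n)" "pr eps c n < side eps c n"
proof -
  let ?P = "\<lambda>q. prime q \<and> q < side eps c n"
  have ex: "\<exists>q. ?P q" using assms by (intro exI[of _ 2]) auto
  have "?P (Greatest ?P)" by (rule GreatestI_ex_nat[OF ex, of "side eps c n"]) auto
  then show "prime (pr eps c n)" "pr eps c n < side eps c n" unfolding pr_def by auto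
qed

lemma Qsq_mem:
  assumes "z \<in> Qsq eps c n"
  shows "2 ^ n \<le> fst z" "fst z \<le> 2 ^ n + int (side eps c n)"
    "Ytop eps n - int (side eps c n) \<le> snd z" "snd z \<le> Ytop eps n"
  using assms unfolding Qsq_def by auto

lemma Qsq_finite: "finite (Qsq eps c n)"
proof -
  have "Qsq eps c n \<subseteq> {2 ^ n..2 ^ n + int (side eps c n)} \<times> {Ytop eps n - int (side eps c n)..Ytop eps n}"
    unfolding Qsq_def by auto
  then show ?thesis by (rule finite_subset) auto
qed

lemma Qsq_disj:
  assumes "c > 1" "eps > 0" "z \<in> Qsq eps c m" "z \<in> Qsq eps c k"
  shows "m = k"
proof (rule ccontr)
  assume ne: "m \<noteq> k"
  have a1: "2 ^ m \<le> fst z" "fst z \<le> 2 ^ m + int (side eps c m)"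
    using Qsq_mem[OF assms(3)] by auto
  have a2: "int (side eps c m) < 2 ^ m" by (rule side_lt_pow_int[OF assms(1,2)])
  have "fst z < 2 * 2 ^ m" using a1 a2 by linarith
  then have a: "2 ^ m \<le> fst z" "fst z < 2 ^ (m + 1)" using a1 by auto
  have b1: "2 ^ k \<le> fst z" "fst z \<le> 2 ^ k + int (side eps c k)"
    using Qsq_mem[OF assms(4)] by auto
  have b2: "int (side eps c k) < 2 ^ k" by (rule side_lt_pow_int[OF assms(1,2)])
  have "fst z < 2 * 2 ^ k" using b1 b2 by linarith
  then have b: "2 ^ k \<le> fst z" "fst z < 2 ^ (k + 1)" using b1 by auto
  show False
  proof (cases "m < k")
    case True
    then have "(2::int) ^ (m + 1) \<le> 2 ^ k" by (intro power_increasing) auto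
    then show False using a b by linarith
  next
    case False
    then have "k < m" using ne by simp
    then have "(2::int) ^ (k + 1) \<le> 2 ^ m" by (intro power_increasing) auto
    then show False using a b by linarith
  qed
qed

lemma f_step:
  assumes "3 \<le> k" "0 < eps" "eps \<le> 1"
  shows "(2::real) ^ k / real k powr (1 + eps) \<le> 2 ^ (k + 1) / real (k + 1) powr (1 + eps)"
proof -
  have kp: "real k > 0" using assms by simp
  have r: "real (k + 1) / real k \<le> 4 / 3" using assms by (simp add: field_simps)
  have r1: "1 \<le> real (k + 1) / real k" using kp by simp
  have "(real (k + 1) / real k) powr (1 + eps) \<le> (real (k + 1) / real k) powr 2"
    using r1 assms by (intro powr_mono) auto
  also have "\<dots> \<le> (4 / 3) powr 2" using r r1 by (intro powr_mono2) auto
  also have "\<dots> = (4 / 3) ^ 2" by (simp add: powr_numeral)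
  also have "\<dots> < 2" by (simp add: power2_eq_square)
  finally have q: "(real (k + 1) / real k) powr (1 + eps) < 2" .
  have "real (k + 1) powr (1 + eps) = (real (k + 1) / real k) powr (1 + eps) * real k powr (1 + eps)"
    using kp by (simp add: powr_divide)
  also have "\<dots> \<le> 2 * real k powr (1 + eps)" using q by (intro mult_right_mono) auto
  finally have "real (k + 1) powr (1 + eps) \<le> 2 * real k powr (1 + eps)" .
  moreover have "real k powr (1 + eps) > 0" "real (k + 1) powr (1 + eps) > 0" using kp by auto
  ultimately show ?thesis by (simp add: field_simps)
qed

lemma g_step:
  assumes "1 \<le> k" "0 \<le> eps" "eps \<le> 1"
  shows "(2::real) ^ k / real k powr eps \<le> 2 ^ (k + 1) / real (k + 1) powr eps"
proof -
  have kp: "real k > 0" using assms by simp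
  have r: "real (k + 1) / real k \<le> 2" using assms by (simp add: field_simps)
  have r1: "1 \<le> real (k + 1) / real k" using kp by simp
  have "(real (k + 1) / real k) powr eps \<le> (real (k + 1) / real k) powr 1"
    using r1 assms by (intro powr_mono) auto
  also have "\<dots> \<le> 2" using r r1 by simp
  finally have q: "(real (k + 1) / real k) powr eps \<le> 2" .
  have "real (k + 1) powr eps = (real (k + 1) / real k) powr eps * real k powr eps"
    using kp by (simp add: powr_divide)
  also have "\<dots> \<le> 2 * real k powr eps" using q by (intro mult_right_mono) auto
  finally have "real (k + 1) powr eps \<le> 2 * real k powr eps" .
  moreover have "real k powr eps > 0" "real (k + 1) powr eps > 0" using kp by auto
  ultimately show ?thesis by (simp add: field_simps)
qed

lemma chain_mono:
  fixes h :: "nat \<Rightarrow> real"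
  assumes "\<And>k. a \<le> k \<Longrightarrow> h k \<le> h (k + 1)" "a \<le> m" "m \<le> n"
  shows "h m \<le> h n"
  using assms(3)
proof (induction n rule: dec_induct)
  case base then show ?case by simp
next
  case (step k)
  then show ?case using assms(1)[of k] assms(2) by simp
qed



definition "Sr c eps (n::nat) = 2 ^ n / (c * real n powr (1 + eps))"
definition "Sp eps (n::nat) = 2 ^ n / real n powr (1 + eps)"
definition "Fb c eps (n::nat) = (2 ^ n / 2) / (c * (real n - 1) powr (1 + eps))"
definition "Fp eps (n::nat) = (2 ^ n / 2) / ((real n - 1) powr (1 + eps))"
definition "sig eps n = (2 ^ n / real n powr eps + Fp eps n) / (2 ^ n / 2 - Fp eps n)"
definition "del c eps n = (Fb c eps n + Sr c eps n) * (2 * real n powr (-eps) + 1) / (2 ^ n / 2 - Fp eps n)"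
definition "KK eps (n::nat) = real n powr (eps + 1/3)"
definition "PhiS c eps n = (del c eps n * (KK eps n)^2 + 1) * (sig eps n * (Sr c eps n * sig eps n + 1))
    + Sr c eps n * del c eps n * (real n + 1) + Fb c eps n * del c eps n + 2 * Sr c eps n / KK eps n + (real n + 1)"

lemma Phi_mono:
  fixes d d' h h' s s' q q' L L' K :: real
  assumes "0 \<le> d" "d \<le> d'" "0 \<le> h" "h \<le> h'" "0 \<le> s" "s \<le> s'" "0 \<le> q" "q \<le> q'" "0 \<le> L" "L \<le> L'" "K > 0"
  shows "(d * K^2 + 1) * (h * (s * h + 1)) + s * d * L + q * d + 2 * s / K + L
       \<le> (d' * K^2 + 1) * (h' * (s' * h' + 1)) + s' * d' * L' + q' * d' + 2 * s' / K + L'"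
proof -
  have 1: "d * K^2 + 1 \<le> d' * K^2 + 1" using assms by (simp add: mult_right_mono)
  have 2: "s * h \<le> s' * h'" using assms by (intro mult_mono) auto
  have 3: "h * (s * h + 1) \<le> h' * (s' * h' + 1)" using assms 2 by (intro mult_mono add_right_mono) auto
  have 4: "(d * K^2 + 1) * (h * (s * h + 1)) \<le> (d' * K^2 + 1) * (h' * (s' * h' + 1))"
    by (rule mult_mono[OF 1 3]) (use assms in auto)
  have 5: "s * d * L \<le> s' * d' * L'" using assms by (intro mult_mono) auto
  have 6: "q * d \<le> q' * d'" using assms by (intro mult_mono) auto
  have 7: "2 * s / K \<le> 2 * s' / K" using assms by (intro divide_right_mono) auto
  show ?thesis using 4 5 6 7 assms by linarith
qed


lemma per_m_bound:
  fixes eps c :: real and m n :: nat and S :: "(int \<times> int) set" and am bm :: int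
  assumes eps: "0 < eps" "eps < 1" and c1': "c > 1"
    and mn: "1 \<le> m" "m < n"
    and sm3: "side eps c m \<ge> 3"
    and Ppar: "S \<inter> Qsq eps c m \<subseteq> parab eps c m am bm"
    and smF: "real (side eps c m) \<le> Fb c eps n"
    and YmG: "real_of_int (Ytop eps m) \<le> (2 ^ n / 2) / ((real n - 1) powr eps)"
    and e1: "0 < 2 ^ n / 2 - Fp eps n"
    and e2: "sig eps n < 1"
    and e3: "0 < 2 ^ n / real n powr eps - 1 - (2 ^ n / 2) / (real n - 1) powr eps - Sp eps n"
    and e4: "2 \<le> KK eps n"
  shows "real (card {z \<in> Qsq eps c n. \<exists>u v. u \<in> S \<inter> Qsq eps c m \<and> v \<in> S \<inter> Qsq eps c m \<and> u \<noteq> v \<and> collinear3 z u v})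
     \<le> Sr c eps m * PhiS c eps n"
proof -
  define sm where "sm = side eps c m"
  define sn where "sn = side eps c n"
  define p where "p = pr eps c m"
  define A where "A = Ytop eps n - Ytop eps m"
  define D where "D = (2::int) ^ n - 2 ^ m"
  define lo where "lo = real_of_int (A - int sn) / real_of_int (D + int sn)"
  define hi where "hi = real_of_int (A + int sm) / real_of_int (D - int sm)"
  define P where "P = S \<inter> Qsq eps c m"
  define Q where "Q = Qsq eps c n"
  have c1: "c \<ge> 1" using c1' by simp
  have c0: "c > 0" using c1 by simp
  have n1: "real n - 1 > 0" using mn by simp
  have pp: "prime p" "p < sm" using pr_props[OF sm3] p_def sm_def by auto
  have p0: "p > 0" using pp(1) prime_gt_0_nat by blast
  have smlt: "int sm < 2 ^ m" using side_lt_pow_int[OF c1' eps(1), of m] sm_def by simp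
  have pm: "(2::int) ^ (m + 1) \<le> 2 ^ n" using mn by (intro power_increasing) auto
  have pmr: "(2::real) ^ m \<le> 2 ^ n / 2"
  proof -
    have "(2::real) ^ (m + 1) \<le> 2 ^ n" using mn by (intro power_increasing) auto
    then show ?thesis by simp
  qed
  have FbFp: "Fb c eps n \<le> Fp eps n"
    unfolding Fb_def Fp_def using c1 n1
    by (intro divide_left_mono) (auto intro!: mult_right_mono[of 1 c, simplified] mult_pos_pos)
  have Fb0: "0 \<le> Fb c eps n" unfolding Fb_def using c0 n1 by simp
  have snSr: "real sn \<le> Sr c eps n" unfolding sn_def Sr_def using side_le[OF c0] .
  have SrSp: "Sr c eps n \<le> Sp eps n" unfolding Sr_def Sp_def using c1 mn
    by (intro divide_left_mono) (auto intro!: mult_right_mono[of 1 c, simplified] mult_pos_pos)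
  have Dr: "real_of_int D \<ge> 2 ^ n / 2" "real_of_int D \<le> 2 ^ n"
    using pmr unfolding D_def by auto
  have Dp0: "real_of_int D > 0"
  proof -
    have "(0::real) < 2 ^ n / 2" by simp
    then show ?thesis using Dr by linarith
  qed
  have Ar: "real_of_int A \<le> 2 ^ n / real n powr eps"
    using Ytop_bounds(2)[where eps=eps and n=n] Ytop_bounds(1)[where eps=eps and n=m] unfolding A_def by simp
  have Ar2: "real_of_int A \<ge> 2 ^ n / real n powr eps - 1 - (2 ^ n / 2) / (real n - 1) powr eps"
    using Ytop_bounds(3)[where eps=eps and n=n] YmG unfolding A_def by simp
  have Asn: "real_of_int A - real sn > 0" using Ar2 e3 snSr SrSp by linarith
  have Dsm: "real_of_int D - real sm \<ge> 2 ^ n / 2 - Fp eps n"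
    using Dr smF FbFp sm_def by linarith
  have Dsm0: "real_of_int D - real sm > 0" using Dsm e1 by linarith
  have slope: "fst u < fst z \<and> lo \<le> real_of_int (snd z - snd u) / real_of_int (fst z - fst u) \<and>
        real_of_int (snd z - snd u) / real_of_int (fst z - fst u) \<le> hi"
    if u: "u \<in> Qsq eps c m" and z: "z \<in> Q" for u z
  proof -
    note U = Qsq_mem[OF u] and Z = Qsq_mem[OF z[unfolded Q_def]]
    define X where "X = real_of_int (fst z - fst u)"
    define Y where "Y = real_of_int (snd z - snd u)"
    have i1: "D - int sm \<le> fst z - fst u" "fst z - fst u \<le> D + int sn"
      using U Z unfolding D_def sm_def sn_def by linarith+
    have i2: "A - int sn \<le> snd z - snd u" "snd z - snd u \<le> A + int sm"
      using U Z unfolding A_def sm_def sn_def by linarith+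
    have "real_of_int (D - int sm) \<le> X" "X \<le> real_of_int (D + int sn)"
      using i1 unfolding X_def by (simp_all only: of_int_le_iff)
    then have X1: "X \<ge> real_of_int D - real sm" "X \<le> real_of_int D + real sn" by simp_all
    have "real_of_int (A - int sn) \<le> Y" "Y \<le> real_of_int (A + int sm)"
      using i2 unfolding Y_def by (simp_all only: of_int_le_iff)
    then have Y1: "Y \<ge> real_of_int A - real sn" "Y \<le> real_of_int A + real sm" by simp_all
    have X0: "X > 0" using X1 Dsm0 by linarith
    have Y0: "Y > 0" using Y1 Asn by linarith
    have "fst u < fst z" using X0 X_def by simp
    moreover have "lo \<le> Y / X"
    proof -
      have "lo = (real_of_int A - real sn) / (real_of_int D + real sn)" unfolding lo_def by simp
      also have "\<dots> \<le> Y / (real_of_int D + real sn)" using Y1 X0 X1 by (intro divide_right_mono) auto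
      also have "\<dots> \<le> Y / X" using Y0 X0 X1 by (intro divide_left_mono) auto
      finally show ?thesis .
    qed
    moreover have "Y / X \<le> hi"
    proof -
      have "Y / X \<le> (real_of_int A + real sm) / X" using Y1 X0 by (intro divide_right_mono) auto
      also have "\<dots> \<le> (real_of_int A + real sm) / (real_of_int D - real sm)"
        using Y1 Y0 X1 Dsm0 by (intro divide_left_mono) auto
      also have "\<dots> = hi" unfolding hi_def by simp
      finally show ?thesis .
    qed
    ultimately show ?thesis unfolding X_def Y_def by simp
  qed
  have lo0: "0 < lo" unfolding lo_def using Asn Dr
    by (smt (verit) divide_pos_pos of_int_diff of_int_of_nat_eq of_nat_0_le_iff of_int_add zero_less_power)
  have hisig: "hi \<le> sig eps n"
  proof -
    have "hi = (real_of_int A + real sm) / (real_of_int D - real sm)" unfolding hi_def by simp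
    also have "\<dots> \<le> (2 ^ n / real n powr eps + Fp eps n) / (real_of_int D - real sm)"
      using Ar smF FbFp sm_def Dsm0 by (intro divide_right_mono) auto
    also have "\<dots> \<le> (2 ^ n / real n powr eps + Fp eps n) / (2 ^ n / 2 - Fp eps n)"
    proof (rule divide_left_mono)
      show "0 \<le> 2 ^ n / real n powr eps + Fp eps n" using FbFp Fb0 by simp
    qed (use Dsm e1 in auto)
    finally show ?thesis unfolding sig_def .
  qed
  have hi1: "hi < 1" using hisig e2 by simp
  have lohi: "lo \<le> hi"
  proof -
    have u: "(2 ^ m, Ytop eps m) \<in> Qsq eps c m" unfolding Qsq_def by simp
    have z: "(2 ^ n, Ytop eps n) \<in> Q" unfolding Q_def Qsq_def by simp
    show ?thesis using slope[OF u z] by linarith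
  qed
  have hi0: "0 \<le> hi" using lo0 lohi by simp
  have dl: "hi - lo \<le> del c eps n"
  proof -
    have a: "hi - lo = (real sm + real sn) * (real_of_int A + real_of_int D) /
                 ((real_of_int D - real sm) * (real_of_int D + real sn))"
      unfolding hi_def lo_def using Dsm0 Dr
      by (simp add: field_simps)
    have b: "(real_of_int A + real_of_int D) / (real_of_int D + real sn) \<le> 2 * real n powr (-eps) + 1"
    proof -
      have Dp: "real_of_int D > 0" by (rule Dp0)
      have "(real_of_int A + real_of_int D) / (real_of_int D + real sn) \<le> (real_of_int A + real_of_int D) / real_of_int D"
        using Dp Asn by (intro divide_left_mono) auto
      also have "\<dots> = real_of_int A / real_of_int D + 1" using Dp by (simp add: field_simps)
      also have "\<dots> \<le> (2 ^ n / real n powr eps) / (2 ^ n / 2) + 1"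
      proof -
        have "real_of_int A / real_of_int D \<le> (2 ^ n / real n powr eps) / real_of_int D"
          using Ar Dp by (intro divide_right_mono) auto
        also have "\<dots> \<le> (2 ^ n / real n powr eps) / (2 ^ n / 2)"
          using Dr Dp by (intro divide_left_mono) auto
        finally show ?thesis by simp
      qed
      also have "\<dots> = 2 * real n powr (-eps) + 1" by (simp add: powr_minus field_simps)
      finally show ?thesis .
    qed
    have "hi - lo = (real sm + real sn) * ((real_of_int A + real_of_int D) / (real_of_int D + real sn))
                      / (real_of_int D - real sm)" using a by simp
    also have "\<dots> \<le> (Fb c eps n + Sr c eps n) * (2 * real n powr (-eps) + 1) / (real_of_int D - real sm)"
    proof (rule divide_right_mono)
      show "(real sm + real sn) * ((real_of_int A + real_of_int D) / (real_of_int D + real sn))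
             \<le> (Fb c eps n + Sr c eps n) * (2 * real n powr (-eps) + 1)"
        using smF snSr b sm_def Asn Dr Dp0 by (intro mult_mono) (auto intro!: divide_nonneg_pos)
    qed (use Dsm0 in simp)
    also have "\<dots> \<le> (Fb c eps n + Sr c eps n) * (2 * real n powr (-eps) + 1) / (2 ^ n / 2 - Fp eps n)"
    proof (rule divide_left_mono)
      show "0 \<le> (Fb c eps n + Sr c eps n) * (2 * real n powr (-eps) + 1)"
        using Fb0 snSr by (intro mult_nonneg_nonneg) auto
    qed (use Dsm e1 in auto)
    finally show ?thesis unfolding del_def .
  qed
  have Pp: "isparab p (2 ^ m) (Ytop eps m) am bm u" if "u \<in> P" for u
    using that Ppar unfolding P_def isparab_def parab_def p_def by blast
  have PQ: "P \<subseteq> Qsq eps c m" unfolding P_def by simp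
  have step1: "real (card {z\<in>Q. \<exists>u v. u \<in> P \<and> v \<in> P \<and> u \<noteq> v \<and> collinear3 z u v})
     \<le> (\<Sum>w\<in>Wset p lo hi. real p / real_of_int (fst w) * (real sn / real_of_int (fst w) + 1))"
  proof (rule red_card[OF pp(1) Pp])
    show "finite Q" unfolding Q_def by (rule Qsq_finite)
    show "2 ^ n \<le> fst z \<and> fst z \<le> 2 ^ n + int sn" if "z \<in> Q" for z
      using Qsq_mem[OF that[unfolded Q_def]] sn_def by simp
    show "fst u < fst z \<and> lo \<le> real_of_int (snd z - snd u) / real_of_int (fst z - fst u) \<and>
        real_of_int (snd z - snd u) / real_of_int (fst z - fst u) \<le> hi" if "u \<in> P" "z \<in> Q" for u z
      using slope[of u z] that PQ by blast
  qed (use lo0 hi1 in auto)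
  also have "\<dots> \<le> real p * (((hi - lo) * (KK eps n)^2 + 1) * (hi * (real sn * hi + 1)) + real sn * (hi - lo) * (ln (real p) + 1)
          + real p * (hi - lo) + 2 * real sn / KK eps n + (ln (real p) + 1))"
    by (rule W_sum_bound[OF lo0 hi1 lohi e4 p0])
  also have "\<dots> \<le> Sr c eps m * PhiS c eps n"
  proof (rule mult_mono)
    have "real p \<le> real sm" using pp by simp
    also have "\<dots> \<le> Sr c eps m" unfolding sm_def Sr_def by (rule side_le[OF c0])
    finally show "real p \<le> Sr c eps m" .
    have lnp: "ln (real p) + 1 \<le> real n + 1"
    proof -
      have "real p < 2 ^ n"
      proof -
        have "int p < 2 ^ m" using pp smlt by simp
        then have "real p < 2 ^ m" by (metis of_int_of_nat_eq of_int_less_iff of_int_numeral of_int_power)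
        also have "\<dots> \<le> 2 ^ n" using mn by (intro power_increasing) auto
        finally show ?thesis .
      qed
      then have "ln (real p) \<le> ln (2 ^ n)" using p0 by simp
      also have "\<dots> = real n * ln 2" by (simp add: ln_realpow)
      also have "\<dots> \<le> real n" using ln_2_less_1 by (simp add: mult_left_le)
      finally show ?thesis by simp
    qed
    have lnp0: "0 \<le> ln (real p) + 1" using p0 by simp
    have pF: "real p \<le> Fb c eps n" using pp smF sm_def by simp
    show "((hi - lo) * (KK eps n)^2 + 1) * (hi * (real sn * hi + 1)) + real sn * (hi - lo) * (ln (real p) + 1)
          + real p * (hi - lo) + 2 * real sn / KK eps n + (ln (real p) + 1) \<le> PhiS c eps n"
      unfolding PhiS_def
      by (rule Phi_mono) (use lohi dl hi0 hisig snSr pF lnp lnp0 e4 in auto)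
    show "0 \<le> Sr c eps m" unfolding Sr_def using c0 by simp
    have nn: "0 \<le> hi - lo" using lohi by simp
    have Kp: "KK eps n > 0" using e4 by simp
    show "0 \<le> ((hi - lo) * (KK eps n)^2 + 1) * (hi * (real sn * hi + 1)) + real sn * (hi - lo) * (ln (real p) + 1)
          + real p * (hi - lo) + 2 * real sn / KK eps n + (ln (real p) + 1)"
      using nn hi0 lnp0 Kp p0 by (intro add_nonneg_nonneg mult_nonneg_nonneg divide_nonneg_pos) auto
  qed
  finally show ?thesis unfolding P_def Q_def .
qed



definition "Tg c eps (n::nat) = 8 * real n * 2 ^ n / (c^2 * real n powr (2 + 2 * eps))"

lemma ev_e1: assumes "0 < eps" "eps < 1" shows "eventually (\<lambda>n. 0 < 2 ^ n / 2 - Fp eps n) sequentially"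
  using assms unfolding Fp_def by real_asymp
lemma ev_e2: assumes "0 < eps" "eps < 1" shows "eventually (\<lambda>n. sig eps n < 1) sequentially"
  using assms unfolding sig_def Fp_def by real_asymp
lemma ev_e3: assumes "0 < eps" "eps < 1"
  shows "eventually (\<lambda>n. 0 < 2 ^ n / real n powr eps - 1 - (2 ^ n / 2) / (real n - 1) powr eps - Sp eps n) sequentially"
  using assms unfolding Sp_def by real_asymp
lemma ev_e4: assumes "0 < eps" "eps < 1" shows "eventually (\<lambda>n. 2 \<le> KK eps n) sequentially"
  using assms unfolding KK_def by real_asymp
lemma ev_e6: assumes "0 < eps" "eps < 1" shows "eventually (\<lambda>n. 2 \<le> (2 ^ n / 2) / ((real n - 1) powr (1 + eps))) sequentially"
  using assms by real_asymp
lemma ev_e7: assumes "0 < eps" "eps < 1" shows "eventually (\<lambda>n. 9 * 2 ^ 9 < 2 / 5 * (2 ^ n / real n powr (1 + eps))) sequentially"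
  using assms by real_asymp

lemma ev_t5: fixes eps :: real assumes "0 < eps" "eps < 1"
  shows "eventually (\<lambda>n. Sp eps n * ((Fp eps n + Sp eps n) * (2 * real n powr (-eps) + 1) / (2 ^ n / 2 - Fp eps n)) * (real n + 1) \<le> 4 * real n * 2 ^ n / real n powr (2 + 2 * eps)) sequentially"
  using assms unfolding Sp_def Fp_def by real_asymp

lemma ev_t1: assumes "0 < eps" "eps < 1" "c > 0"
  shows "eventually (\<lambda>n. del c eps n * (KK eps n)^2 * sig eps n * (Sr c eps n * sig eps n) \<le> Tg c eps n / 16) sequentially"
  using assms unfolding Sr_def Fb_def Fp_def sig_def del_def KK_def Tg_def by real_asymp
lemma ev_t2: assumes "0 < eps" "eps < 1" "c > 0"
  shows "eventually (\<lambda>n. del c eps n * (KK eps n)^2 * sig eps n \<le> Tg c eps n / 16) sequentially"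
  using assms unfolding Sr_def Fb_def Fp_def sig_def del_def KK_def Tg_def by real_asymp
lemma ev_t3: assumes "0 < eps" "eps < 1" "c > 0"
  shows "eventually (\<lambda>n. sig eps n * (Sr c eps n * sig eps n) \<le> Tg c eps n / 16) sequentially"
  using assms unfolding Sr_def Fb_def Fp_def sig_def del_def KK_def Tg_def by real_asymp
lemma ev_t4: assumes "0 < eps" "eps < 1" "c > 0"
  shows "eventually (\<lambda>n. sig eps n \<le> Tg c eps n / 16) sequentially"
  using assms unfolding Sr_def Fb_def Fp_def sig_def del_def KK_def Tg_def by real_asymp
lemma ev_t6: assumes "0 < eps" "eps < 1" "c > 0"
  shows "eventually (\<lambda>n. Fb c eps n * del c eps n \<le> Tg c eps n / 16) sequentially"
  using assms unfolding Sr_def Fb_def Fp_def sig_def del_def KK_def Tg_def by real_asymp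
lemma ev_t7: assumes "0 < eps" "eps < 1" "c > 0"
  shows "eventually (\<lambda>n. 2 * Sr c eps n / KK eps n \<le> Tg c eps n / 16) sequentially"
  using assms unfolding Sr_def Fb_def Fp_def sig_def del_def KK_def Tg_def by real_asymp
lemma ev_t8: assumes "0 < eps" "eps < 1" "c > 0"
  shows "eventually (\<lambda>n. real n + 1 \<le> Tg c eps n / 16) sequentially"
  using assms unfolding Tg_def by real_asymp


lemma ev_Phi:
  assumes e: "0 < eps" "eps < 1" and c: "c > 0"
  shows "eventually (\<lambda>n. PhiS c eps n \<le> Tg c eps n) sequentially"
proof -
  have ev: "eventually (\<lambda>n.
      del c eps n * (KK eps n)^2 * sig eps n * (Sr c eps n * sig eps n) \<le> Tg c eps n / 16 \<and>
      del c eps n * (KK eps n)^2 * sig eps n \<le> Tg c eps n / 16 \<and>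
      sig eps n * (Sr c eps n * sig eps n) \<le> Tg c eps n / 16 \<and>
      sig eps n \<le> Tg c eps n / 16 \<and>
      Fb c eps n * del c eps n \<le> Tg c eps n / 16 \<and>
      2 * Sr c eps n / KK eps n \<le> Tg c eps n / 16 \<and>
      real n + 1 \<le> Tg c eps n / 16 \<and>
      Sp eps n * ((Fp eps n + Sp eps n) * (2 * real n powr (-eps) + 1) / (2 ^ n / 2 - Fp eps n)) * (real n + 1) \<le> 4 * real n * 2 ^ n / real n powr (2 + 2 * eps)) sequentially"
    by (intro eventually_conj ev_t1[OF e c] ev_t2[OF e c] ev_t3[OF e c] ev_t4[OF e c] ev_t6[OF e c] ev_t7[OF e c]
      ev_t8[OF e c] ev_t5[OF e])
  show ?thesis
  proof (rule eventually_mono[OF ev])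
    fix n assume H: "del c eps n * (KK eps n)^2 * sig eps n * (Sr c eps n * sig eps n) \<le> Tg c eps n / 16 \<and>
      del c eps n * (KK eps n)^2 * sig eps n \<le> Tg c eps n / 16 \<and>
      sig eps n * (Sr c eps n * sig eps n) \<le> Tg c eps n / 16 \<and>
      sig eps n \<le> Tg c eps n / 16 \<and>
      Fb c eps n * del c eps n \<le> Tg c eps n / 16 \<and>
      2 * Sr c eps n / KK eps n \<le> Tg c eps n / 16 \<and>
      real n + 1 \<le> Tg c eps n / 16 \<and>
      Sp eps n * ((Fp eps n + Sp eps n) * (2 * real n powr (-eps) + 1) / (2 ^ n / 2 - Fp eps n)) * (real n + 1) \<le> 4 * real n * 2 ^ n / real n powr (2 + 2 * eps)"
    define X where "X = Sp eps n * ((Fp eps n + Sp eps n) * (2 * real n powr (-eps) + 1) / (2 ^ n / 2 - Fp eps n)) * (real n + 1)"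
    have SrSp: "Sr c eps n = Sp eps n / c" unfolding Sr_def Sp_def by simp
    have FbFp: "Fb c eps n = Fp eps n / c" unfolding Fb_def Fp_def by simp
    have "Sr c eps n * del c eps n * (real n + 1) = X / c^2"
      unfolding X_def del_def SrSp FbFp using c by (simp add: field_simps power2_eq_square)
    also have "\<dots> \<le> (4 * real n * 2 ^ n / real n powr (2 + 2 * eps)) / c^2"
      using H X_def c by (intro divide_right_mono) auto
    also have "\<dots> = Tg c eps n / 2" unfolding Tg_def by (simp add: field_simps)
    finally have t5: "Sr c eps n * del c eps n * (real n + 1) \<le> Tg c eps n / 2" .
    have "PhiS c eps n = del c eps n * (KK eps n)^2 * sig eps n * (Sr c eps n * sig eps n)
        + del c eps n * (KK eps n)^2 * sig eps n + sig eps n * (Sr c eps n * sig eps n) + sig eps n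
        + Sr c eps n * del c eps n * (real n + 1) + Fb c eps n * del c eps n + 2 * Sr c eps n / KK eps n + (real n + 1)"
      unfolding PhiS_def by (simp add: algebra_simps)
    then show "PhiS c eps n \<le> Tg c eps n" using H t5 by linarith
  qed
qed



lemma f_step13:
  assumes "10 \<le> k" "0 < eps" "eps \<le> 1"
  shows "13 / 8 * ((2::real) ^ k / real k powr (1 + eps)) \<le> 2 ^ (k + 1) / real (k + 1) powr (1 + eps)"
proof -
  have kp: "real k > 0" using assms by simp
  have r: "real (k + 1) / real k \<le> 11 / 10" using assms by (simp add: field_simps)
  have r1: "1 \<le> real (k + 1) / real k" using kp by simp
  have "(real (k + 1) / real k) powr (1 + eps) \<le> (real (k + 1) / real k) powr 2"
    using r1 assms by (intro powr_mono) auto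
  also have "\<dots> \<le> (11 / 10) powr 2" using r r1 by (intro powr_mono2) auto
  also have "\<dots> = (11 / 10) ^ 2" by (simp add: powr_numeral)
  also have "\<dots> \<le> 16 / 13" by (simp add: power2_eq_square)
  finally have q: "(real (k + 1) / real k) powr (1 + eps) \<le> 16 / 13" .
  have "real (k + 1) powr (1 + eps) = (real (k + 1) / real k) powr (1 + eps) * real k powr (1 + eps)"
    using kp by (simp add: powr_divide)
  also have "\<dots> \<le> 16 / 13 * real k powr (1 + eps)" using q by (intro mult_right_mono) auto
  finally have a: "real (k + 1) powr (1 + eps) \<le> 16 / 13 * real k powr (1 + eps)" .
  have pk: "real k powr (1 + eps) > 0" "real (k + 1) powr (1 + eps) > 0" using kp by auto
  have "13 / 8 * ((2::real) ^ k / real k powr (1 + eps)) = 2 ^ (k + 1) / (16 / 13 * real k powr (1 + eps))"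
    by (simp add: field_simps)
  also have "\<dots> \<le> 2 ^ (k + 1) / real (k + 1) powr (1 + eps)"
    using a pk by (intro divide_left_mono) auto
  finally show ?thesis .
qed

lemma tail_sum:
  assumes "10 \<le> n" "0 < eps" "eps \<le> 1"
  shows "(\<Sum>m\<in>{10..<n}. (2::real) ^ m / real m powr (1 + eps)) \<le> 8 / 5 * (2 ^ n / real n powr (1 + eps))"
  using assms(1)
proof (induction n rule: dec_induct)
  case base then show ?case by simp
next
  case (step k)
  have "(\<Sum>m\<in>{10..<Suc k}. (2::real) ^ m / real m powr (1 + eps))
        = (\<Sum>m\<in>{10..<k}. (2::real) ^ m / real m powr (1 + eps)) + 2 ^ k / real k powr (1 + eps)"
    using step.hyps by simp
  also have "\<dots> \<le> 13 / 5 * (2 ^ k / real k powr (1 + eps))" using step.IH by simp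
  also have "\<dots> \<le> 8 / 5 * (2 ^ (k + 1) / real (k + 1) powr (1 + eps))"
    using f_step13[OF step.hyps(1) assms(2,3)] by simp
  finally show ?case by simp
qed

lemma second_part:
  fixes eps c :: real and n0 n :: nat
  assumes e: "0 < eps" "eps < 1" and c: "c > 0" and n0: "1 \<le> n0" and n: "10 \<le> n"
    and e7: "9 * 2 ^ 9 < 2 / 5 * (2 ^ n / real n powr (1 + eps))"
  shows "(\<Sum>m\<in>{n0..<n}. 8 * 2 ^ (m + n) / (c ^ 3 * real n powr (2 + 2 * eps) * real m powr (1 + eps)) * real n)
       < 16 * 2 ^ (n + n) / (c ^ 3 * real n powr (2 + 2 * eps) * real n powr (1 + eps)) * real n"
proof -
  define f where "f m = (2::real) ^ m / real m powr (1 + eps)" for m :: nat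
  define Kn where "Kn = 8 * 2 ^ n * real n / (c ^ 3 * real n powr (2 + 2 * eps))"
  have Kn0: "Kn > 0" unfolding Kn_def using c n by simp
  have fnn: "f m \<ge> 0" for m unfolding f_def by simp
  have trm: "8 * 2 ^ (m + n) / (c ^ 3 * real n powr (2 + 2 * eps) * real m powr (1 + eps)) * real n = Kn * f m" for m
    unfolding Kn_def f_def by (simp add: power_add field_simps)
  have rhs: "16 * 2 ^ (n + n) / (c ^ 3 * real n powr (2 + 2 * eps) * real n powr (1 + eps)) * real n = Kn * (2 * f n)"
    unfolding Kn_def f_def by (simp add: power_add field_simps)
  have "(\<Sum>m\<in>{n0..<n}. f m) \<le> (\<Sum>m\<in>{1..<n}. f m)"
    using n0 fnn by (intro sum_mono2) auto
  also have "\<dots> = (\<Sum>m\<in>{1..<10}. f m) + (\<Sum>m\<in>{10..<n}. f m)"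
    using n by (simp add: sum.atLeastLessThan_concat)
  also have "\<dots> \<le> 9 * 2 ^ 9 + 8 / 5 * f n"
  proof -
    have "(\<Sum>m\<in>{1..<10}. f m) \<le> real (card {1..<(10::nat)}) * 2 ^ 9"
    proof (rule sum_bounded_above)
      fix m assume m: "m \<in> {1..<(10::nat)}"
      have "real m powr (1 + eps) \<ge> 1" using m e by (simp add: ge_one_powr_ge_zero)
      then have "(2::real) ^ m / real m powr (1 + eps) \<le> 2 ^ m / 1"
        using m by (intro divide_left_mono) auto
      then have "f m \<le> 2 ^ m" unfolding f_def by simp
      also have "(2::real) ^ m \<le> 2 ^ 9" using m by (intro power_increasing) auto
      finally show "f m \<le> 2 ^ 9" .
    qed
    moreover have "(\<Sum>m\<in>{10..<n}. f m) \<le> 8 / 5 * f n" unfolding f_def using tail_sum[OF n e(1)] e(2) by simp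
    ultimately show ?thesis by simp
  qed
  also have "\<dots> < 2 * f n" using e7 unfolding f_def by simp
  finally have "(\<Sum>m\<in>{n0..<n}. f m) < 2 * f n" .
  then have "Kn * (\<Sum>m\<in>{n0..<n}. f m) < Kn * (2 * f n)" using Kn0 by simp
  then show ?thesis unfolding trm rhs by (simp add: sum_distrib_left)
qed

lemma smF_lemma:
  assumes e: "0 < eps" "eps < 1" and c: "c > 0" and m: "1 \<le> m" "m < n"
    and e6: "2 \<le> (2 ^ n / 2) / ((real n - 1) powr (1 + eps))"
  shows "real (side eps c m) \<le> Fb c eps n"
proof -
  define f where "f k = (2::real) ^ k / real k powr (1 + eps)" for k :: nat
  have n1: "real (n - 1) = real n - 1" "(2::real) ^ (n - 1) = 2 ^ n / 2" using m
    by (auto simp: of_nat_diff power_diff)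
  have fn: "f (n - 1) = (2 ^ n / 2) / ((real n - 1) powr (1 + eps))" by (simp only: f_def n1)
  have fm: "f m \<le> f (n - 1)"
  proof (cases "3 \<le> m")
    case True
    show ?thesis
      by (rule chain_mono[of 3 f m "n - 1"]) (use True m f_step[OF _ e(1)] e in \<open>auto simp: f_def\<close>)
  next
    case False
    then have "m = 1 \<or> m = 2" using m by auto
    then have "f m \<le> 2"
    proof
      assume "m = 1" then show ?thesis unfolding f_def by simp
    next
      assume m2: "m = 2"
      have "(2::real) powr 1 \<le> 2 powr (1 + eps)" using e by (intro powr_mono) auto
      then have "2 \<le> (2::real) powr (1 + eps)" by simp
      then show ?thesis unfolding f_def m2 by (simp add: field_simps)
    qed
    then show ?thesis using fn e6 by simp
  qed
  have "real (side eps c m) \<le> f m / c" using side_le[OF c, of eps m] unfolding f_def by (simp add: field_simps)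
  also have "\<dots> \<le> f (n - 1) / c" using fm c by (intro divide_right_mono) auto
  also have "\<dots> = Fb c eps n" unfolding fn Fb_def by (simp add: field_simps)
  finally show ?thesis .
qed

lemma YmG_lemma:
  assumes e: "0 < eps" "eps < 1" and m: "1 \<le> m" "m < n"
  shows "real_of_int (Ytop eps m) \<le> (2 ^ n / 2) / ((real n - 1) powr eps)"
proof -
  define g where "g k = (2::real) ^ k / real k powr eps" for k :: nat
  have n1: "real (n - 1) = real n - 1" "(2::real) ^ (n - 1) = 2 ^ n / 2" using m
    by (auto simp: of_nat_diff power_diff)
  have gn: "g (n - 1) = (2 ^ n / 2) / ((real n - 1) powr eps)" by (simp only: g_def n1)
  have "g m \<le> g (n - 1)"
    by (rule chain_mono[of 1 g m "n - 1"]) (use m g_step e in \<open>auto simp: g_def\<close>)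
  moreover have "real_of_int (Ytop eps m) \<le> g m" unfolding g_def by (rule Ytop_bounds(2))
  ultimately show ?thesis using gn by simp
qed



theorem corollary3p7:
  fixes eps c :: real and n0 :: nat and a b :: "nat \<Rightarrow> int" and S :: "(int \<times> int) set"
  assumes "0 < eps" "eps < 1" "c \<ge> 12 / eps"
    and "n0 \<ge> 1" "\<forall>n\<ge>n0. side eps c n \<ge> 3"
    and "valid_construction eps c n0 a b S"
  shows "\<forall>\<^sub>F n in sequentially.
     real (card (red eps c S n))
       \<le> (\<Sum>m\<in>{n0..<n}. 8 * 2 ^ (m + n) / (c ^ 3 * real n powr (2 + 2 * eps) * real m powr (1 + eps)) * real n)
   \<and> (\<Sum>m\<in>{n0..<n}. 8 * 2 ^ (m + n) / (c ^ 3 * real n powr (2 + 2 * eps) * real m powr (1 + eps)) * real n)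
       < 16 * 2 ^ (n + n) / (c ^ 3 * real n powr (2 + 2 * eps) * real n powr (1 + eps)) * real n"
proof -
  note e = assms(1,2)
  have "12 < 12 / eps" using e by (simp add: field_simps)
  then have c12: "c > 1" using assms(3) by linarith
  have c0: "c > 0" using c12 by simp
  have Ssub: "S \<subseteq> (\<Union>k\<in>{n0..}. Qsq eps c k)" using assms(6) unfolding valid_construction_def by (rule conjunct1)
  have Ppar: "S \<inter> Qsq eps c m \<subseteq> parab eps c m (a m) (b m)" if "n0 \<le> m" for m
  proof -
  have "\<forall>n\<ge>n0.
        0 \<le> a n \<and> a n < int (pr eps c n) \<and> 0 \<le> b n \<and> b n < int (pr eps c n) \<and>
        (\<forall>a' b'. 0 \<le> a' \<and> a' < int (pr eps c n) \<and> 0 \<le> b' \<and> b' < int (pr eps c n) \<longrightarrow>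
           card (mixed_triples (parab eps c n (a n) (b n)) (S_before eps c n0 S n))
             \<le> card (mixed_triples (parab eps c n a' b') (S_before eps c n0 S n))) \<and>
        (\<exists>f. (\<forall>T\<in>mixed_triples (parab eps c n (a n) (b n)) (S_before eps c n0 S n).
                  f T \<in> T \<inter> parab eps c n (a n) (b n)) \<and>
             S \<inter> Qsq eps c n = parab eps c n (a n) (b n)
               - f ` mixed_triples (parab eps c n (a n) (b n)) (S_before eps c n0 S n))"
    using assms(6) unfolding valid_construction_def by (rule conjunct2)
  then have "\<exists>f. (\<forall>T\<in>mixed_triples (parab eps c m (a m) (b m)) (S_before eps c n0 S m).
                  f T \<in> T \<inter> parab eps c m (a m) (b m)) \<and>
             S \<inter> Qsq eps c m = parab eps c m (a m) (b m)
               - f ` mixed_triples (parab eps c m (a m) (b m)) (S_before eps c n0 S m)"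
    using that by simp
  then obtain f where "S \<inter> Qsq eps c m = parab eps c m (a m) (b m)
               - f ` mixed_triples (parab eps c m (a m) (b m)) (S_before eps c n0 S m)" by blast
  then show ?thesis by blast
qed
  have ev: "eventually (\<lambda>n. n0 < n \<and> 10 \<le> n \<and> 0 < 2 ^ n / 2 - Fp eps n \<and> sig eps n < 1 \<and>
      0 < 2 ^ n / real n powr eps - 1 - (2 ^ n / 2) / (real n - 1) powr eps - Sp eps n \<and>
      2 \<le> KK eps n \<and> 2 \<le> (2 ^ n / 2) / ((real n - 1) powr (1 + eps)) \<and>
      9 * 2 ^ 9 < 2 / 5 * (2 ^ n / real n powr (1 + eps)) \<and> PhiS c eps n \<le> Tg c eps n) sequentially"
    by (intro eventually_conj eventually_gt_at_top eventually_ge_at_top ev_e1[OF e] ev_e2[OF e] ev_e3[OF e]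
        ev_e4[OF e] ev_e6[OF e] ev_e7[OF e] ev_Phi[OF e c0])
  show ?thesis
  proof (rule eventually_mono[OF ev])
    fix n assume H: "n0 < n \<and> 10 \<le> n \<and> 0 < 2 ^ n / 2 - Fp eps n \<and> sig eps n < 1 \<and>
      0 < 2 ^ n / real n powr eps - 1 - (2 ^ n / 2) / (real n - 1) powr eps - Sp eps n \<and>
      2 \<le> KK eps n \<and> 2 \<le> (2 ^ n / 2) / ((real n - 1) powr (1 + eps)) \<and>
      9 * 2 ^ 9 < 2 / 5 * (2 ^ n / real n powr (1 + eps)) \<and> PhiS c eps n \<le> Tg c eps n"
    define B where "B m = 8 * 2 ^ (m + n) / (c ^ 3 * real n powr (2 + 2 * eps) * real m powr (1 + eps)) * real n" for m
    define R where "R m = {z \<in> Qsq eps c n. \<exists>u v. u \<in> S \<inter> Qsq eps c m \<and> v \<in> S \<inter> Qsq eps c m \<and> u \<noteq> v \<and> collinear3 z u v}" for m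
    have sub: "red eps c S n \<subseteq> (\<Union>m\<in>{n0..<n}. R m)"
    proof
      fix z assume "z \<in> red eps c S n"
      then obtain m u v where z: "z \<in> Qsq eps c n" and mn: "m < n" and u: "u \<in> S \<inter> Qsq eps c m"
        and v: "v \<in> S \<inter> Qsq eps c m" and uv: "u \<noteq> v" and col: "collinear3 z u v"
        unfolding red_def by blast
      obtain k where k: "n0 \<le> k" "u \<in> Qsq eps c k" using u Ssub by blast
      have "m = k" using Qsq_disj[OF c12 e(1)] u k by blast
      then have "m \<in> {n0..<n}" using k mn by simp
      moreover have "z \<in> R m" unfolding R_def using z u v uv col by blast
      ultimately show "z \<in> (\<Union>m\<in>{n0..<n}. R m)" by blast
    qed
    have finR: "finite (R m)" for m unfolding R_def using Qsq_finite[of eps c n] by simp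
    have "card (red eps c S n) \<le> card (\<Union>m\<in>{n0..<n}. R m)"
      using sub finR by (intro card_mono) auto
    also have "\<dots> \<le> (\<Sum>m\<in>{n0..<n}. card (R m))" by (rule card_UN_le) simp
    finally have "real (card (red eps c S n)) \<le> real (\<Sum>m\<in>{n0..<n}. card (R m))" by linarith
    also have "\<dots> = (\<Sum>m\<in>{n0..<n}. real (card (R m)))" by simp
    also have "\<dots> \<le> (\<Sum>m\<in>{n0..<n}. B m)"
    proof (rule sum_mono)
      fix m assume m: "m \<in> {n0..<n}"
      have m1: "1 \<le> m" "m < n" using m assms(4) by auto
      have "real (card (R m)) \<le> Sr c eps m * PhiS c eps n"
        unfolding R_def
      proof (rule per_m_bound[OF e c12 m1])
        show "3 \<le> side eps c m" using assms(5) m by simp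
        show "S \<inter> Qsq eps c m \<subseteq> parab eps c m (a m) (b m)" using Ppar m by simp
        show "real (side eps c m) \<le> Fb c eps n" using smF_lemma[OF e c0 m1] H by simp
        show "real_of_int (Ytop eps m) \<le> 2 ^ n / 2 / (real n - 1) powr eps" using YmG_lemma[OF e m1] by simp
      qed (use H in auto)
      also have "\<dots> \<le> Sr c eps m * Tg c eps n"
        using H c0 by (intro mult_left_mono) (auto simp: Sr_def)
      also have "\<dots> = B m" unfolding Sr_def Tg_def B_def by (simp add: power_add field_simps power2_eq_square power3_eq_cube)
      finally show "real (card (R m)) \<le> B m" .
    qed
    finally have first: "real (card (red eps c S n)) \<le> (\<Sum>m\<in>{n0..<n}. B m)" .
    have second: "(\<Sum>m\<in>{n0..<n}. B m)
       < 16 * 2 ^ (n + n) / (c ^ 3 * real n powr (2 + 2 * eps) * real n powr (1 + eps)) * real n"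
      unfolding B_def using second_part[OF e c0 assms(4)] H by simp
    show "real (card (red eps c S n))
       \<le> (\<Sum>m\<in>{n0..<n}. 8 * 2 ^ (m + n) / (c ^ 3 * real n powr (2 + 2 * eps) * real m powr (1 + eps)) * real n)
     \<and> (\<Sum>m\<in>{n0..<n}. 8 * 2 ^ (m + n) / (c ^ 3 * real n powr (2 + 2 * eps) * real m powr (1 + eps)) * real n)
       < 16 * 2 ^ (n + n) / (c ^ 3 * real n powr (2 + 2 * eps) * real n powr (1 + eps)) * real n"
      using first second unfolding B_def by simp
  qed
qed


end
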